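(* Let $(\Omega,\Sigma,\mu)$ be an admissible measure space. (a) The map $E\mapsto E_0$, regarded as a map $\mathcal{J}_0(\mu)\to\mathcal{J}_0(\mu)$, is a closure operator on $\langle\mathcal{J}_0(\mu),\vartriangleleft\rangle$, where $E\vartriangleleft F$ means $F\subset^1E$; that is, for all $E,F\in\mathcal{J}_0(\mu)$: $E_0\in\mathcal{J}_0(\mu)$; $F\subset^1E$ implies $F_0\subset^1E_0$; $E_0\subset^1E$; and $(E_0)_0=E_0$. (b) The map $E\mapsto E''$, regarded as a map $\mathcal{J}_0(\mu)\to\mathcal{J}_0(\mu)$, is a closure operator with respect to $\subset^1$; that is, for all $E,F\in\mathcal{J}_0(\mu)$: $E''\in\mathcal{J}_0(\mu)$; $E\subset^1F$ implies $E''\subset^1F''$; $E\subset^1E''$; and $(E'')''=E''$.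
   Context: $L_0(\mu)$: classes of measurable real functions ordered a.e. Admissible measure space: $\mu$ complete; a set whose intersection with every finite-measure measurable set is measurable is itself measurable; $\mu$ semifinite; $\mu$ has the direct sum property. A Banach ideal space (BIS) is a vector subspace $E\subset L_0(\mu)$ with complete norm such that $y\in E$, $|x|\le|y|$ a.e. imply $x\in E$, $\|x\|_E\le\|y\|_E$; maximal width: the only $z\in L_0(\mu)$ with $zy=0$ for all $y\in E$ is $z=0$. $E\subset^1F$: $E\subseteq F$ and $\|x\|_F\le\|x\|_E$ for $x\in E$; equality means equal sets with equal norms. Dual $E'$: all $f\in L_0(\mu)$ with $\|f\|_{E'}=\sup\{\int_\Omega fx\,d\mu:\|x\|_E=1\}<\infty$. $E_0$: the elements $x\in E$ with order continuous norm (for every decreasing net $|x|\ge x_i\downarrow0$, $\|x_i\|_E\to0$), with the norm of $E$. A foundation in $E$ is an ideal of $E$ of maximal width. $\mathcal{J}_0(\mu)$: BIS $E$ of maximal width such that $E_0$ is a foundation in $E$ and $(E')_0$ is a foundation in $E'$. A closure operator $\pi$ on a poset $\langle L,<\rangle$ satisfies: $a<b\Rightarrow\pi(a)<\pi(b)$, $a<\pi(a)$, $\pi(\pi(a))=\pi(a)$. *)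

theory Defs
  imports "HOL-Analysis.Analysis"
begin

definition semifinite :: "'a measure \<Rightarrow> bool" where
  "semifinite M \<longleftrightarrow> (\<forall>A\<in>sets M. emeasure M A = \<infinity> \<longrightarrow>
      (\<exists>B\<in>sets M. B \<subseteq> A \<and> 0 < emeasure M B \<and> emeasure M B < \<infinity>))"

definition locally_determined :: "'a measure \<Rightarrow> bool" where
  "locally_determined M \<longleftrightarrow> (\<forall>A. A \<subseteq> space M \<longrightarrow>
      (\<forall>B\<in>sets M. emeasure M B < \<infinity> \<longrightarrow> A \<inter> B \<in> sets M) \<longrightarrow> A \<in> sets M)"

definition direct_sum_property :: "'a measure \<Rightarrow> bool" where
  "direct_sum_property M \<longleftrightarrow> (\<exists>P. P \<subseteq> sets M \<and> disjoint P \<and> \<Union>P = space M \<and>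
      (\<forall>B\<in>P. emeasure M B < \<infinity>) \<and>
      (\<forall>A\<in>sets M. emeasure M A =
          (SUP Q\<in>{Q. finite Q \<and> Q \<subseteq> P}. \<Sum>B\<in>Q. emeasure M (A \<inter> B))))"

definition admissible :: "'a measure \<Rightarrow> bool" where
  "admissible M \<longleftrightarrow> complete_measure M \<and> locally_determined M \<and> semifinite M
      \<and> direct_sum_property M"

text \<open>Elements of L_0 are represented by measurable real functions; a space is a pair
  (set of representatives, norm on representatives).  Only the values of the norm on
  the set matter.\<close>
type_synonym 'a bis = "('a \<Rightarrow> real) set \<times> (('a \<Rightarrow> real) \<Rightarrow> real)"

definition is_bis :: "'a measure \<Rightarrow> 'a bis \<Rightarrow> bool" where
  "is_bis M E \<longleftrightarrow> (let S = fst E; n = snd E in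
     S \<subseteq> borel_measurable M \<and>
     (\<lambda>_. 0) \<in> S \<and>
     (\<forall>x\<in>S. \<forall>y\<in>S. (\<lambda>w. x w + y w) \<in> S) \<and>
     (\<forall>x\<in>S. \<forall>c::real. (\<lambda>w. c * x w) \<in> S) \<and>
     (\<forall>x\<in>S. 0 \<le> n x) \<and>
     (\<forall>x\<in>S. n x = 0 \<longrightarrow> (AE w in M. x w = 0)) \<and>
     (\<forall>x\<in>S. \<forall>y\<in>S. n (\<lambda>w. x w + y w) \<le> n x + n y) \<and>
     (\<forall>x\<in>S. \<forall>c::real. n (\<lambda>w. c * x w) = \<bar>c\<bar> * n x) \<and>
     (\<forall>X::nat \<Rightarrow> 'a \<Rightarrow> real. (\<forall>k. X k \<in> S) \<longrightarrow>
        (\<forall>e>0. \<exists>N. \<forall>i\<ge>N. \<forall>j\<ge>N. n (\<lambda>w. X i w - X j w) < e) \<longrightarrow>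
        (\<exists>x\<in>S. (\<lambda>k. n (\<lambda>w. X k w - x w)) \<longlonglongrightarrow> 0)) \<and>
     (\<forall>y\<in>S. \<forall>x\<in>borel_measurable M. (AE w in M. \<bar>x w\<bar> \<le> \<bar>y w\<bar>) \<longrightarrow> x \<in> S \<and> n x \<le> n y))"

definition max_width :: "'a measure \<Rightarrow> ('a \<Rightarrow> real) set \<Rightarrow> bool" where
  "max_width M S \<longleftrightarrow> (\<forall>z\<in>borel_measurable M.
      (\<forall>y\<in>S. AE w in M. z w * y w = 0) \<longrightarrow> (AE w in M. z w = 0))"

definition sub1 :: "'a bis \<Rightarrow> 'a bis \<Rightarrow> bool" where
  "sub1 E F \<longleftrightarrow> fst E \<subseteq> fst F \<and> (\<forall>x\<in>fst E. snd F x \<le> snd E x)"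

definition bis_eq :: "'a bis \<Rightarrow> 'a bis \<Rightarrow> bool" where
  "bis_eq E F \<longleftrightarrow> fst E = fst F \<and> (\<forall>x\<in>fst E. snd E x = snd F x)"

definition kdual :: "'a measure \<Rightarrow> 'a bis \<Rightarrow> 'a bis" where
  "kdual M E = (
     {f \<in> borel_measurable M. (\<forall>x\<in>fst E. integrable M (\<lambda>w. f w * x w)) \<and>
        bdd_above {(\<integral>w. f w * x w \<partial>M) | x. x \<in> fst E \<and> snd E x = 1}},
     (\<lambda>f. Sup (insert 0 {(\<integral>w. f w * x w \<partial>M) | x. x \<in> fst E \<and> snd E x = 1})))"

text \<open>Order continuity of the norm at x: for every decreasing net (represented by
  its downward directed set of values) with |x| \<ge> x_i and inf x_i = 0 in L_0,
  the norms tend to 0.\<close>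
definition oc_elem :: "'a measure \<Rightarrow> 'a bis \<Rightarrow> ('a \<Rightarrow> real) \<Rightarrow> bool" where
  "oc_elem M E x \<longleftrightarrow> (\<forall>D. D \<subseteq> borel_measurable M \<and> D \<noteq> {} \<and>
      (\<forall>a\<in>D. \<forall>b\<in>D. \<exists>c\<in>D. (AE w in M. c w \<le> a w) \<and> (AE w in M. c w \<le> b w)) \<and>
      (\<forall>d\<in>D. AE w in M. 0 \<le> d w \<and> d w \<le> \<bar>x w\<bar>) \<and>
      (\<forall>z\<in>borel_measurable M. (\<forall>d\<in>D. AE w in M. z w \<le> d w) \<longrightarrow> (AE w in M. z w \<le> 0))
      \<longrightarrow> (\<forall>e>0. \<exists>d\<in>D. snd E d < e))"

definition oc_part :: "'a measure \<Rightarrow> 'a bis \<Rightarrow> 'a bis" where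
  "oc_part M E = ({x \<in> fst E. oc_elem M E x}, snd E)"

definition foundation :: "'a measure \<Rightarrow> ('a \<Rightarrow> real) set \<Rightarrow> ('a \<Rightarrow> real) set \<Rightarrow> bool" where
  "foundation M S T \<longleftrightarrow> S \<subseteq> T \<and> (\<lambda>_. 0) \<in> S \<and>
     (\<forall>x\<in>S. \<forall>y\<in>S. (\<lambda>w. x w + y w) \<in> S) \<and>
     (\<forall>x\<in>S. \<forall>c::real. (\<lambda>w. c * x w) \<in> S) \<and>
     (\<forall>y\<in>S. \<forall>x\<in>T. (AE w in M. \<bar>x w\<bar> \<le> \<bar>y w\<bar>) \<longrightarrow> x \<in> S) \<and>
     max_width M S"

definition J0 :: "'a measure \<Rightarrow> 'a bis \<Rightarrow> bool" where
  "J0 M E \<longleftrightarrow> is_bis M E \<and> max_width M (fst E) \<and>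
     foundation M (fst (oc_part M E)) (fst E) \<and>
     foundation M (fst (oc_part M (kdual M E))) (fst (kdual M E))"

end

theory Submission
  imports Defs
begin


definition pre_bis :: "'a measure \<Rightarrow> ('a \<Rightarrow> real) set \<Rightarrow> (('a \<Rightarrow> real) \<Rightarrow> real) \<Rightarrow> bool" where
  "pre_bis M S n \<longleftrightarrow> S \<subseteq> borel_measurable M \<and>
     (\<forall>x\<in>S. \<forall>c::real. (\<lambda>w. c * x w) \<in> S) \<and>
     (\<forall>x\<in>S. 0 \<le> n x) \<and>
     (\<forall>x\<in>S. n x = 0 \<longrightarrow> (AE w in M. x w = 0)) \<and>
     (\<forall>x\<in>S. \<forall>c::real. n (\<lambda>w. c * x w) = \<bar>c\<bar> * n x) \<and>
     (\<forall>y\<in>S. \<forall>x\<in>borel_measurable M. (AE w in M. \<bar>x w\<bar> \<le> \<bar>y w\<bar>) \<longrightarrow> x \<in> S \<and> n x \<le> n y)"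

lemma is_bis_iff: "is_bis M E \<longleftrightarrow>
     fst E \<subseteq> borel_measurable M \<and>
     (\<lambda>_. 0) \<in> fst E \<and>
     (\<forall>x\<in>fst E. \<forall>y\<in>fst E. (\<lambda>w. x w + y w) \<in> fst E) \<and>
     (\<forall>x\<in>fst E. \<forall>c::real. (\<lambda>w. c * x w) \<in> fst E) \<and>
     (\<forall>x\<in>fst E. 0 \<le> snd E x) \<and>
     (\<forall>x\<in>fst E. snd E x = 0 \<longrightarrow> (AE w in M. x w = 0)) \<and>
     (\<forall>x\<in>fst E. \<forall>y\<in>fst E. snd E (\<lambda>w. x w + y w) \<le> snd E x + snd E y) \<and>
     (\<forall>x\<in>fst E. \<forall>c::real. snd E (\<lambda>w. c * x w) = \<bar>c\<bar> * snd E x) \<and>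
     (\<forall>X::nat \<Rightarrow> 'a \<Rightarrow> real. (\<forall>k. X k \<in> fst E) \<longrightarrow>
        (\<forall>e>0. \<exists>N. \<forall>i\<ge>N. \<forall>j\<ge>N. snd E (\<lambda>w. X i w - X j w) < e) \<longrightarrow>
        (\<exists>x\<in>fst E. (\<lambda>k. snd E (\<lambda>w. X k w - x w)) \<longlonglongrightarrow> 0)) \<and>
     (\<forall>y\<in>fst E. \<forall>x\<in>borel_measurable M. (AE w in M. \<bar>x w\<bar> \<le> \<bar>y w\<bar>) \<longrightarrow> x \<in> fst E \<and> snd E x \<le> snd E y)"
  unfolding is_bis_def Let_def by simp

lemma is_bis_pre: "is_bis M E \<Longrightarrow> pre_bis M (fst E) (snd E)"
  unfolding is_bis_iff pre_bis_def by blast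

context
  fixes M :: "'a measure" and S :: "('a \<Rightarrow> real) set" and n
  assumes pb: "pre_bis M S n"
begin

lemma pb_meas: "x \<in> S \<Longrightarrow> x \<in> borel_measurable M"
  using pb unfolding pre_bis_def by blast
lemma pb_scale: "x \<in> S \<Longrightarrow> (\<lambda>w. c * x w) \<in> S"
  using pb unfolding pre_bis_def by blast
lemma pb_nonneg: "x \<in> S \<Longrightarrow> 0 \<le> n x"
  using pb unfolding pre_bis_def by blast
lemma pb_zero_ae: "x \<in> S \<Longrightarrow> n x = 0 \<Longrightarrow> AE w in M. x w = 0"
  using pb unfolding pre_bis_def by blast
lemma pb_homog: "x \<in> S \<Longrightarrow> n (\<lambda>w. c * x w) = \<bar>c\<bar> * n x"
  using pb unfolding pre_bis_def by blast
lemma pb_ideal: "y \<in> S \<Longrightarrow> x \<in> borel_measurable M \<Longrightarrow> (AE w in M. \<bar>x w\<bar> \<le> \<bar>y w\<bar>) \<Longrightarrow> x \<in> S \<and> n x \<le> n y"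
  using pb unfolding pre_bis_def by blast

end

lemma kdual_fst: "f \<in> fst (kdual M E) \<longleftrightarrow> f \<in> borel_measurable M \<and>
   (\<forall>x\<in>fst E. integrable M (\<lambda>w. f w * x w)) \<and>
   bdd_above {(\<integral>w. f w * x w \<partial>M) | x. x \<in> fst E \<and> snd E x = 1}"
  by (simp add: kdual_def)

lemma kdual_snd: "snd (kdual M E) f = Sup (insert 0 {(\<integral>w. f w * x w \<partial>M) | x. x \<in> fst E \<and> snd E x = 1})"
  by (simp add: kdual_def)

lemma knorm_nonneg: "f \<in> fst (kdual M E) \<Longrightarrow> 0 \<le> snd (kdual M E) f"
  unfolding kdual_snd by (rule cSup_upper) (auto simp: kdual_fst)

lemma kdual_cong: "fst A = fst B \<Longrightarrow> (\<forall>x\<in>fst A. snd A x = snd B x) \<Longrightarrow> kdual M A = kdual M B"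
proof -
  assume a: "fst A = fst B" "\<forall>x\<in>fst A. snd A x = snd B x"
  have "\<And>f. {(\<integral>w. f w * x w \<partial>M) | x. x \<in> fst A \<and> snd A x = 1} = {(\<integral>w. f w * x w \<partial>M) | x. x \<in> fst B \<and> snd B x = 1}"
    using a by auto
  then show ?thesis unfolding kdual_def using a by simp
qed

lemma pairing_le:
  assumes pb: "pre_bis M (fst E) (snd E)" and f: "f \<in> fst (kdual M E)" and v: "v \<in> fst E"
  shows "(\<integral>w. f w * v w \<partial>M) \<le> snd (kdual M E) f * snd E v"
proof cases
  assume z: "snd E v = 0"
  then have ae: "AE w in M. v w = 0" using pb_zero_ae[OF pb v] by simp
  have fm: "f \<in> borel_measurable M" using f by (simp add: kdual_fst)
  have vm: "v \<in> borel_measurable M" using pb_meas[OF pb v] .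
  have "(\<integral>w. f w * v w \<partial>M) = (\<integral>w. 0 \<partial>M)"
    by (rule integral_cong_AE) (use ae fm vm in auto)
  then show ?thesis using knorm_nonneg[OF f] z by simp
next
  assume nz: "snd E v \<noteq> 0"
  have pos: "snd E v > 0" using nz pb_nonneg[OF pb v] by simp
  define c where "c = 1 / snd E v"
  have v'S: "(\<lambda>w. c * v w) \<in> fst E" using pb_scale[OF pb v] .
  have n1: "snd E (\<lambda>w. c * v w) = 1" using pb_homog[OF pb v, of c] pos by (simp add: c_def)
  have "(\<integral>w. f w * (c * v w) \<partial>M) \<le> snd (kdual M E) f"
    unfolding kdual_snd
    by (rule cSup_upper) (use f v'S n1 in \<open>auto simp: kdual_fst\<close>)
  moreover have "(\<integral>w. f w * (c * v w) \<partial>M) = c * (\<integral>w. f w * v w \<partial>M)"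
    by (simp add: mult.left_commute)
  ultimately have "c * (\<integral>w. f w * v w \<partial>M) \<le> snd (kdual M E) f" by simp
  then show ?thesis using pos by (simp add: c_def field_simps)
qed

lemma pairing_abs:
  assumes pb: "pre_bis M (fst E) (snd E)" and f: "f \<in> fst (kdual M E)" and x: "x \<in> fst E"
  shows "(\<integral>\<^sup>+w. ennreal \<bar>f w * x w\<bar> \<partial>M) \<le> ennreal (snd (kdual M E) f * snd E x)"
proof -
  have fm: "f \<in> borel_measurable M" using f by (simp add: kdual_fst)
  have xm: "x \<in> borel_measurable M" using pb_meas[OF pb x] .
  define v where "v = (\<lambda>w. sgn (f w) * \<bar>x w\<bar>)"
  have vm: "v \<in> borel_measurable M" unfolding v_def using fm xm by measurable
  have "AE w in M. \<bar>v w\<bar> \<le> \<bar>x w\<bar>" by (auto simp: v_def abs_mult abs_sgn_eq)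
  then have vS: "v \<in> fst E" and nv: "snd E v \<le> snd E x" using pb_ideal[OF pb x vm] by auto
  have int: "integrable M (\<lambda>w. f w * v w)" using f vS by (simp add: kdual_fst)
  have eq: "(\<lambda>w. f w * v w) = (\<lambda>w. \<bar>f w * x w\<bar>)"
  proof (rule ext)
    fix w
    have "f w * sgn (f w) = \<bar>f w\<bar>" by (simp add: abs_if sgn_if)
    then show "f w * v w = \<bar>f w * x w\<bar>" by (simp add: v_def abs_mult mult.assoc[symmetric])
  qed
  have int2: "integrable M (\<lambda>w. \<bar>f w * x w\<bar>)" using int eq by simp
  have "(\<integral>\<^sup>+w. ennreal \<bar>f w * x w\<bar> \<partial>M) = ennreal (\<integral>w. \<bar>f w * x w\<bar> \<partial>M)"
    by (rule nn_integral_eq_integral[OF int2]) simp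
  also have "(\<integral>w. \<bar>f w * x w\<bar> \<partial>M) = (\<integral>w. f w * v w \<partial>M)" using eq by simp
  also have "\<dots> \<le> snd (kdual M E) f * snd E v" by (rule pairing_le[OF pb f vS])
  also have "\<dots> \<le> snd (kdual M E) f * snd E x"
    using nv knorm_nonneg[OF f] by (simp add: mult_left_mono)
  finally show ?thesis by (simp add: ennreal_leI)
qed

lemma kdual_crit:
  assumes Sm: "fst E \<subseteq> borel_measurable M" and g: "g \<in> borel_measurable M" and C: "0 \<le> C"
    and bnd: "\<And>x. x \<in> fst E \<Longrightarrow> (\<integral>\<^sup>+w. ennreal \<bar>g w * x w\<bar> \<partial>M) \<le> ennreal (C * snd E x)"
  shows "g \<in> fst (kdual M E) \<and> snd (kdual M E) g \<le> C"
proof -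
  have int: "integrable M (\<lambda>w. g w * x w)" if x: "x \<in> fst E" for x
  proof (rule integrableI_bounded)
    show "(\<lambda>w. g w * x w) \<in> borel_measurable M" using g Sm x by auto
    show "(\<integral>\<^sup>+w. ennreal (norm (g w * x w)) \<partial>M) < \<infinity>"
      using bnd[OF x] by (simp add: le_less_trans)
  qed
  have le: "(\<integral>w. g w * x w \<partial>M) \<le> C" if x: "x \<in> fst E" and nx: "snd E x = 1" for x
  proof -
    have "ennreal (norm (\<integral>w. g w * x w \<partial>M)) \<le> (\<integral>\<^sup>+w. ennreal (norm (g w * x w)) \<partial>M)"
      by (rule integral_norm_bound_ennreal[OF int[OF x]])
    also have "\<dots> \<le> ennreal C" using bnd[OF x] nx by simp
    finally have "norm (\<integral>w. g w * x w \<partial>M) \<le> C" using C by (simp add: ennreal_le_iff)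
    then show ?thesis by simp
  qed
  have bdd: "bdd_above {(\<integral>w. g w * x w \<partial>M) | x. x \<in> fst E \<and> snd E x = 1}"
    using le by (auto intro!: bdd_aboveI[of _ C])
  have "snd (kdual M E) g \<le> C"
    unfolding kdual_snd using le C by (intro cSup_least) auto
  then show ?thesis using g int bdd by (simp add: kdual_fst)
qed



lemma sub1_bidual:
  assumes pb: "pre_bis M (fst E) (snd E)"
  shows "sub1 E (kdual M (kdual M E))"
  unfolding sub1_def
proof (intro conjI ballI subsetI)
  fix x assume x: "x \<in> fst E"
  have "x \<in> fst (kdual M (kdual M E)) \<and> snd (kdual M (kdual M E)) x \<le> snd E x"
  proof (rule kdual_crit)
    show "fst (kdual M E) \<subseteq> borel_measurable M" by (auto simp: kdual_fst)
    show "x \<in> borel_measurable M" using pb_meas[OF pb x] .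
    show "0 \<le> snd E x" using pb_nonneg[OF pb x] .
    fix f assume f: "f \<in> fst (kdual M E)"
    have "(\<integral>\<^sup>+w. ennreal \<bar>f w * x w\<bar> \<partial>M) \<le> ennreal (snd (kdual M E) f * snd E x)"
      by (rule pairing_abs[OF pb f x])
    then show "(\<integral>\<^sup>+w. ennreal \<bar>x w * f w\<bar> \<partial>M) \<le> ennreal (snd E x * snd (kdual M E) f)"
      by (simp add: mult.commute)
  qed
  then show "x \<in> fst (kdual M (kdual M E))" "snd (kdual M (kdual M E)) x \<le> snd E x" by auto
qed

lemma sub1_kdual_anti:
  assumes pbF: "pre_bis M (fst F) (snd F)" and sub: "sub1 E F"
  shows "sub1 (kdual M F) (kdual M E)"
  unfolding sub1_def
proof (intro conjI ballI subsetI)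
  fix f assume f: "f \<in> fst (kdual M F)"
  have "f \<in> fst (kdual M E) \<and> snd (kdual M E) f \<le> snd (kdual M F) f"
  proof (rule kdual_crit)
    show "fst E \<subseteq> borel_measurable M" using sub pbF unfolding sub1_def pre_bis_def by blast
    show "f \<in> borel_measurable M" using f by (simp add: kdual_fst)
    show "0 \<le> snd (kdual M F) f" using knorm_nonneg[OF f] .
    fix x assume x: "x \<in> fst E"
    have xF: "x \<in> fst F" and le: "snd F x \<le> snd E x" using sub x unfolding sub1_def by auto
    have "(\<integral>\<^sup>+w. ennreal \<bar>f w * x w\<bar> \<partial>M) \<le> ennreal (snd (kdual M F) f * snd F x)"
      by (rule pairing_abs[OF pbF f xF])
    also have "\<dots> \<le> ennreal (snd (kdual M F) f * snd E x)"
      using le knorm_nonneg[OF f] by (intro ennreal_leI mult_left_mono) auto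
    finally show "(\<integral>\<^sup>+w. ennreal \<bar>f w * x w\<bar> \<partial>M) \<le> ennreal (snd (kdual M F) f * snd E x)" .
  qed
  then show "f \<in> fst (kdual M E)" "snd (kdual M E) f \<le> snd (kdual M F) f" by auto
qed

lemma sub1_antisym: "sub1 A B \<Longrightarrow> sub1 B A \<Longrightarrow> bis_eq A B"
  unfolding sub1_def bis_eq_def by (auto intro: antisym)

context
  fixes M :: "'a measure" and E :: "'a bis"
  assumes pb: "pre_bis M (fst E) (snd E)"
begin

lemma kd_meas: "f \<in> fst (kdual M E) \<Longrightarrow> f \<in> borel_measurable M"
  by (simp add: kdual_fst)

lemma Sm: "fst E \<subseteq> borel_measurable M" using pb unfolding pre_bis_def by blast

lemma kd_add:
  assumes f: "f \<in> fst (kdual M E)" and g: "g \<in> fst (kdual M E)"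
  shows "(\<lambda>w. f w + g w) \<in> fst (kdual M E) \<and>
     snd (kdual M E) (\<lambda>w. f w + g w) \<le> snd (kdual M E) f + snd (kdual M E) g"
proof (rule kdual_crit[OF Sm])
  show "(\<lambda>w. f w + g w) \<in> borel_measurable M" using kd_meas[OF f] kd_meas[OF g] by measurable
  show "0 \<le> snd (kdual M E) f + snd (kdual M E) g" using knorm_nonneg[OF f] knorm_nonneg[OF g] by simp
  fix x assume x: "x \<in> fst E"
  have xm: "x \<in> borel_measurable M" using Sm x by auto
  have "(\<integral>\<^sup>+w. ennreal \<bar>(f w + g w) * x w\<bar> \<partial>M) \<le> (\<integral>\<^sup>+w. ennreal \<bar>f w * x w\<bar> + ennreal \<bar>g w * x w\<bar> \<partial>M)"
    by (intro nn_integral_mono) (auto simp: distrib_right ennreal_plus[symmetric] simp del: ennreal_plus intro!: ennreal_leI abs_triangle_ineq)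
  also have "\<dots> = (\<integral>\<^sup>+w. ennreal \<bar>f w * x w\<bar> \<partial>M) + (\<integral>\<^sup>+w. ennreal \<bar>g w * x w\<bar> \<partial>M)"
    using kd_meas[OF f] kd_meas[OF g] xm by (intro nn_integral_add) auto
  also have "\<dots> \<le> ennreal (snd (kdual M E) f * snd E x) + ennreal (snd (kdual M E) g * snd E x)"
    by (intro add_mono pairing_abs[OF pb f x] pairing_abs[OF pb g x])
  also have "\<dots> = ennreal ((snd (kdual M E) f + snd (kdual M E) g) * snd E x)"
    using knorm_nonneg[OF f] knorm_nonneg[OF g] pb_nonneg[OF pb x]
    by (simp add: distrib_right ennreal_plus[symmetric] del: ennreal_plus)
  finally show "(\<integral>\<^sup>+w. ennreal \<bar>(f w + g w) * x w\<bar> \<partial>M) \<le> ennreal ((snd (kdual M E) f + snd (kdual M E) g) * snd E x)" .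
qed

lemma kd_scale:
  assumes f: "f \<in> fst (kdual M E)"
  shows "(\<lambda>w. c * f w) \<in> fst (kdual M E) \<and>
     snd (kdual M E) (\<lambda>w. c * f w) \<le> \<bar>c\<bar> * snd (kdual M E) f"
proof (rule kdual_crit[OF Sm])
  show "(\<lambda>w. c * f w) \<in> borel_measurable M" using kd_meas[OF f] by measurable
  show "0 \<le> \<bar>c\<bar> * snd (kdual M E) f" using knorm_nonneg[OF f] by simp
  fix x assume x: "x \<in> fst E"
  have xm: "x \<in> borel_measurable M" using Sm x by auto
  have "(\<integral>\<^sup>+w. ennreal \<bar>c * f w * x w\<bar> \<partial>M) = (\<integral>\<^sup>+w. ennreal \<bar>c\<bar> * ennreal \<bar>f w * x w\<bar> \<partial>M)"
    by (simp add: abs_mult ennreal_mult mult.assoc)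
  also have "\<dots> = ennreal \<bar>c\<bar> * (\<integral>\<^sup>+w. ennreal \<bar>f w * x w\<bar> \<partial>M)"
    using kd_meas[OF f] xm by (intro nn_integral_cmult) auto
  also have "\<dots> \<le> ennreal \<bar>c\<bar> * ennreal (snd (kdual M E) f * snd E x)"
    by (intro mult_left_mono pairing_abs[OF pb f x]) auto
  also have "\<dots> = ennreal (\<bar>c\<bar> * snd (kdual M E) f * snd E x)"
    using knorm_nonneg[OF f] pb_nonneg[OF pb x] by (simp add: ennreal_mult[symmetric] mult.assoc)
  finally show "(\<integral>\<^sup>+w. ennreal \<bar>c * f w * x w\<bar> \<partial>M) \<le> ennreal (\<bar>c\<bar> * snd (kdual M E) f * snd E x)" .
qed

lemma kd_homog:
  assumes f: "f \<in> fst (kdual M E)"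
  shows "snd (kdual M E) (\<lambda>w. c * f w) = \<bar>c\<bar> * snd (kdual M E) f"
proof cases
  assume "c = 0"
  then show ?thesis using kd_scale[OF f, of c] knorm_nonneg[of "\<lambda>w. c * f w" M E] by auto
next
  assume c: "c \<noteq> 0"
  have cf: "(\<lambda>w. c * f w) \<in> fst (kdual M E)" using kd_scale[OF f] by blast
  have "snd (kdual M E) (\<lambda>w. inverse c * (c * f w)) \<le> \<bar>inverse c\<bar> * snd (kdual M E) (\<lambda>w. c * f w)"
    using kd_scale[OF cf] by blast
  moreover have "(\<lambda>w. inverse c * (c * f w)) = f" using c by (simp add: mult.assoc[symmetric])
  ultimately have "snd (kdual M E) f \<le> \<bar>inverse c\<bar> * snd (kdual M E) (\<lambda>w. c * f w)" by simp
  then have "\<bar>c\<bar> * snd (kdual M E) f \<le> snd (kdual M E) (\<lambda>w. c * f w)"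
    using c by (simp add: field_simps abs_inverse)
  then show ?thesis using kd_scale[OF f, of c] by simp
qed

lemma kd_diff:
  assumes f: "f \<in> fst (kdual M E)" and g: "g \<in> fst (kdual M E)"
  shows "(\<lambda>w. f w - g w) \<in> fst (kdual M E)"
proof -
  have "(\<lambda>w. (-1) * g w) \<in> fst (kdual M E)" using kd_scale[OF g] by blast
  from kd_add[OF f this] show ?thesis by simp
qed

lemma kd_ideal:
  assumes y: "y \<in> fst (kdual M E)" and xm: "x \<in> borel_measurable M"
    and le: "AE w in M. \<bar>x w\<bar> \<le> \<bar>y w\<bar>"
  shows "x \<in> fst (kdual M E) \<and> snd (kdual M E) x \<le> snd (kdual M E) y"
proof (rule kdual_crit[OF Sm xm knorm_nonneg[OF y]])
  fix z assume z: "z \<in> fst E"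
  have "(\<integral>\<^sup>+w. ennreal \<bar>x w * z w\<bar> \<partial>M) \<le> (\<integral>\<^sup>+w. ennreal \<bar>y w * z w\<bar> \<partial>M)"
    using le by (intro nn_integral_mono_AE) (auto simp: abs_mult intro!: ennreal_leI mult_right_mono)
  also have "\<dots> \<le> ennreal (snd (kdual M E) y * snd E z)" by (rule pairing_abs[OF pb y z])
  finally show "(\<integral>\<^sup>+w. ennreal \<bar>x w * z w\<bar> \<partial>M) \<le> ennreal (snd (kdual M E) y * snd E z)" .
qed

lemma kd_zero_ae:
  assumes mw: "max_width M (fst E)" and f: "f \<in> fst (kdual M E)" and z: "snd (kdual M E) f = 0"
  shows "AE w in M. f w = 0"
proof -
  have "AE w in M. f w * x w = 0" if x: "x \<in> fst E" for x
  proof -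
    have "(\<integral>\<^sup>+w. ennreal \<bar>f w * x w\<bar> \<partial>M) \<le> 0"
      using pairing_abs[OF pb f x] z by simp
    then have "(\<integral>\<^sup>+w. ennreal \<bar>f w * x w\<bar> \<partial>M) = 0" by simp
    moreover have "(\<lambda>w. ennreal \<bar>f w * x w\<bar>) \<in> borel_measurable M"
      using kd_meas[OF f] Sm x by auto
    ultimately have "AE w in M. ennreal \<bar>f w * x w\<bar> = 0" by (simp add: nn_integral_0_iff_AE)
    then show ?thesis by eventually_elim simp
  qed
  then show ?thesis using mw kd_meas[OF f] unfolding max_width_def by blast
qed

end



lemma geom_ennreal:
  assumes c: "0 \<le> c"
  shows "(\<Sum>j. ennreal ((1/2)^(j+k) * c)) = ennreal (2 * (1/2)^k * c)"
proof -
  have eq: "(\<lambda>j. (1/2::real)^(j+k) * c) = (\<lambda>j. (1/2)^j * ((1/2)^k * c))"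
    by (simp add: power_add mult.assoc)
  have sg: "summable (\<lambda>j. (1/2::real)^j)" by (rule summable_geometric) simp
  have s: "summable (\<lambda>j. (1/2::real)^(j+k) * c)" unfolding eq by (rule summable_mult2[OF sg])
  have "(\<Sum>j. ennreal ((1/2)^(j+k) * c)) = ennreal (\<Sum>j. (1/2::real)^(j+k) * c)"
    by (rule suminf_ennreal2[OF _ s]) (use c in simp)
  also have "(\<Sum>j. (1/2::real)^(j+k) * c) = (\<Sum>j. (1/2::real)^j) * ((1/2)^k * c)"
    unfolding eq by (rule suminf_mult2[OF sg, symmetric])
  also have "(\<Sum>j. (1/2::real)^j) = 2" using suminf_geometric[of "1/2::real"] by simp
  finally show ?thesis by (simp add: mult.assoc)
qed

lemma kd_complete:
  assumes pb: "pre_bis M (fst E) (snd E)" and mw: "max_width M (fst E)"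
    and X: "\<And>k. X k \<in> fst (kdual M E)"
    and cau: "\<forall>e>0. \<exists>N. \<forall>i\<ge>N. \<forall>j\<ge>N. snd (kdual M E) (\<lambda>w. X i w - X j w) < e"
  shows "\<exists>x\<in>fst (kdual M E). (\<lambda>k. snd (kdual M E) (\<lambda>w. X k w - x w)) \<longlonglongrightarrow> 0"
proof -
  let ?kS = "fst (kdual M E)" and ?kn = "snd (kdual M E)"
  have Sm: "fst E \<subseteq> borel_measurable M" using pb unfolding pre_bis_def by blast
  have "\<forall>j. \<exists>N. \<forall>i\<ge>N. \<forall>k\<ge>N. ?kn (\<lambda>w. X i w - X k w) < (1/2::real)^j"
    using cau by simp
  then have "\<exists>N. \<forall>j. \<forall>i\<ge>N j. \<forall>k\<ge>N j. ?kn (\<lambda>w. X i w - X k w) < (1/2::real)^j"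
    by (rule choice)
  then obtain N where N0: "\<forall>j. \<forall>i\<ge>N j. \<forall>k\<ge>N j. ?kn (\<lambda>w. X i w - X k w) < (1/2::real)^j"
    by blast
  have N: "?kn (\<lambda>w. X i w - X k w) < (1/2)^j" if "i \<ge> N j" "k \<ge> N j" for i j k
    using N0 that by blast
  define r where "r j = (\<Sum>i\<le>j. N i) + j" for j
  have Nsum: "N j \<le> (\<Sum>i\<le>j. N i)" for j by (rule member_le_sum) auto
  have rN: "N j \<le> r j" for j using Nsum[of j] by (simp add: r_def)
  have rSuc: "N j \<le> r (Suc j)" for j using Nsum[of j] by (simp add: r_def)
  define Y where "Y j = X (r j)" for j
  define d where "d j = (\<lambda>w. Y (Suc j) w - Y j w)" for j
  have YK: "Y j \<in> ?kS" for j using X by (simp add: Y_def)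
  have Ym: "Y j \<in> borel_measurable M" for j using kd_meas[OF pb YK] .
  have dK: "d j \<in> ?kS" for j unfolding d_def by (rule kd_diff[OF pb YK YK])
  have dm: "d j \<in> borel_measurable M" for j using kd_meas[OF pb dK] .
  have dn: "?kn (d j) \<le> (1/2)^j" for j
    using N[OF rSuc[of j] rN[of j]] by (simp add: d_def Y_def)
  have dbound: "(\<integral>\<^sup>+w. ennreal \<bar>d j w * x w\<bar> \<partial>M) \<le> ennreal ((1/2)^j * snd E x)"
    if x: "x \<in> fst E" for x j
  proof -
    have "(\<integral>\<^sup>+w. ennreal \<bar>d j w * x w\<bar> \<partial>M) \<le> ennreal (?kn (d j) * snd E x)"
      by (rule pairing_abs[OF pb dK x])
    also have "\<dots> \<le> ennreal ((1/2)^j * snd E x)"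
      using dn pb_nonneg[OF pb x] by (intro ennreal_leI mult_right_mono) auto
    finally show ?thesis .
  qed
  define G where "G w = (\<Sum>j. ennreal \<bar>d j w\<bar>)" for w
  have Gm: "G \<in> borel_measurable M" unfolding G_def using dm by measurable
  have Gx: "G w * ennreal \<bar>x w\<bar> = (\<Sum>j. ennreal \<bar>d j w * x w\<bar>)" for w x
    unfolding G_def by (simp add: abs_mult ennreal_mult)
  have Gint: "(\<integral>\<^sup>+w. G w * ennreal \<bar>x w\<bar> \<partial>M) \<le> ennreal (2 * snd E x)" if x: "x \<in> fst E" for x
  proof -
    have xm: "x \<in> borel_measurable M" using Sm x by auto
    have "(\<integral>\<^sup>+w. G w * ennreal \<bar>x w\<bar> \<partial>M) = (\<integral>\<^sup>+w. (\<Sum>j. ennreal \<bar>d j w * x w\<bar>) \<partial>M)"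
      by (simp only: Gx)
    also have "\<dots> = (\<Sum>j. (\<integral>\<^sup>+w. ennreal \<bar>d j w * x w\<bar> \<partial>M))"
      using dm xm by (intro nn_integral_suminf) auto
    also have "\<dots> \<le> (\<Sum>j. ennreal ((1/2)^(j+0) * snd E x))"
      by (rule suminf_le[OF _ summableI summableI]) (simp add: dbound[OF x])
    also have "\<dots> = ennreal (2 * (1/2)^0 * snd E x)"
      by (rule geom_ennreal[OF pb_nonneg[OF pb x]])
    finally show ?thesis by simp
  qed
  define z where "z w = (if G w = \<infinity> then 1 else 0::real)" for w
  have zm: "z \<in> borel_measurable M" unfolding z_def using Gm by measurable
  have "AE w in M. z w * x w = 0" if x: "x \<in> fst E" for x
  proof -
    have xm: "x \<in> borel_measurable M" using Sm x by auto
    have "(\<integral>\<^sup>+w. G w * ennreal \<bar>x w\<bar> \<partial>M) \<noteq> \<infinity>"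
    proof -
      have "(\<integral>\<^sup>+w. G w * ennreal \<bar>x w\<bar> \<partial>M) < \<infinity>"
        using Gint[OF x] by (rule le_less_trans) simp
      then show ?thesis by simp
    qed
    then have "AE w in M. G w * ennreal \<bar>x w\<bar> \<noteq> \<infinity>"
      using Gm xm by (intro nn_integral_PInf_AE) auto
    then show ?thesis
    proof eventually_elim
      case (elim w)
      then show ?case by (auto simp: z_def ennreal_top_mult split: if_splits)
    qed
  qed
  then have "AE w in M. z w = 0" using mw zm unfolding max_width_def by blast
  then have Gfin: "AE w in M. G w \<noteq> \<infinity>" by eventually_elim (auto simp: z_def split: if_splits)
  define f where "f w = (if G w \<noteq> \<infinity> then Y 0 w + (\<Sum>j. d j w) else 0)" for w
  have fm: "f \<in> borel_measurable M" unfolding f_def using Gm dm Ym by measurable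
  have tail: "ennreal \<bar>f w - Y k w\<bar> \<le> (\<Sum>j. ennreal \<bar>d (j+k) w\<bar>)" if g: "G w \<noteq> \<infinity>" for w k
  proof -
    have sa: "summable (\<lambda>j. \<bar>d j w\<bar>)"
      using g by (intro summable_suminf_not_top) (auto simp: G_def)
    have s: "summable (\<lambda>j. d j w)" by (rule summable_rabs_cancel[OF sa])
    have Yk: "Y k w = Y 0 w + (\<Sum>i<k. d i w)"
      using sum_lessThan_telescope[of "\<lambda>i. Y i w" k] by (simp add: d_def)
    have "f w - Y k w = (\<Sum>j. d j w) - (\<Sum>i<k. d i w)" using g Yk by (simp add: f_def)
    also have "\<dots> = (\<Sum>j. d (j+k) w)" by (rule suminf_minus_initial_segment[OF s, symmetric])
    finally have eq: "f w - Y k w = (\<Sum>j. d (j+k) w)" .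
    have sa': "summable (\<lambda>j. \<bar>d (j+k) w\<bar>)" using summable_ignore_initial_segment[OF sa] .
    have "\<bar>f w - Y k w\<bar> \<le> (\<Sum>j. \<bar>d (j+k) w\<bar>)" unfolding eq by (rule summable_rabs[OF sa'])
    then have "ennreal \<bar>f w - Y k w\<bar> \<le> ennreal (\<Sum>j. \<bar>d (j+k) w\<bar>)" by (rule ennreal_leI)
    also have "\<dots> = (\<Sum>j. ennreal \<bar>d (j+k) w\<bar>)" by (rule suminf_ennreal2[symmetric, OF _ sa']) simp
    finally show ?thesis .
  qed
  have fk: "(\<lambda>w. f w - Y k w) \<in> ?kS \<and> ?kn (\<lambda>w. f w - Y k w) \<le> 2 * (1/2)^k" for k
  proof (rule kdual_crit[OF Sm])
    show "(\<lambda>w. f w - Y k w) \<in> borel_measurable M" using fm Ym by measurable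
    show "0 \<le> 2 * (1/2::real)^k" by simp
    fix x assume x: "x \<in> fst E"
    have xm: "x \<in> borel_measurable M" using Sm x by auto
    have "(\<integral>\<^sup>+w. ennreal \<bar>(f w - Y k w) * x w\<bar> \<partial>M) \<le> (\<integral>\<^sup>+w. (\<Sum>j. ennreal \<bar>d (j+k) w * x w\<bar>) \<partial>M)"
    proof (rule nn_integral_mono_AE)
      show "AE w in M. ennreal \<bar>(f w - Y k w) * x w\<bar> \<le> (\<Sum>j. ennreal \<bar>d (j+k) w * x w\<bar>)"
        using Gfin
      proof eventually_elim
        case (elim w)
        have "ennreal \<bar>(f w - Y k w) * x w\<bar> = ennreal \<bar>f w - Y k w\<bar> * ennreal \<bar>x w\<bar>"
          by (simp add: abs_mult ennreal_mult)
        also have "\<dots> \<le> (\<Sum>j. ennreal \<bar>d (j+k) w\<bar>) * ennreal \<bar>x w\<bar>"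
          by (intro mult_right_mono tail[OF elim]) auto
        also have "\<dots> = (\<Sum>j. ennreal \<bar>d (j+k) w * x w\<bar>)"
          by (simp add: abs_mult ennreal_mult)
        finally show ?case .
      qed
    qed
    also have "\<dots> = (\<Sum>j. (\<integral>\<^sup>+w. ennreal \<bar>d (j+k) w * x w\<bar> \<partial>M))"
      using dm xm by (intro nn_integral_suminf) auto
    also have "\<dots> \<le> (\<Sum>j. ennreal ((1/2)^(j+k) * snd E x))"
      by (rule suminf_le[OF _ summableI summableI]) (rule dbound[OF x])
    also have "\<dots> = ennreal (2 * (1/2)^k * snd E x)"
      by (rule geom_ennreal[OF pb_nonneg[OF pb x]])
    finally show "(\<integral>\<^sup>+w. ennreal \<bar>(f w - Y k w) * x w\<bar> \<partial>M) \<le> ennreal (2 * (1/2)^k * snd E x)" .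
  qed
  have fK: "f \<in> ?kS"
  proof -
    have "(\<lambda>w. (f w - Y 0 w) + Y 0 w) \<in> ?kS" using kd_add[OF pb _ YK] fk by blast
    then show ?thesis by simp
  qed
  have "(\<lambda>i. ?kn (\<lambda>w. X i w - f w)) \<longlonglongrightarrow> 0"
  proof (rule LIMSEQ_I)
    fix e :: real assume e: "0 < e"
    obtain k where k: "(1/2::real)^k < e/3" using real_arch_pow_inv[of "e/3" "1/2::real"] e by auto
    have "norm (?kn (\<lambda>w. X i w - f w) - 0) < e" if i: "i \<ge> r k" for i
    proof -
      have a: "(\<lambda>w. X i w - Y k w) \<in> ?kS" using kd_diff[OF pb X YK] .
      have b: "(\<lambda>w. Y k w - f w) \<in> ?kS" using kd_diff[OF pb YK fK] .
      have c: "(\<lambda>w. X i w - f w) \<in> ?kS" using kd_diff[OF pb X fK] .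
      have eq: "(\<lambda>w. (X i w - Y k w) + (Y k w - f w)) = (\<lambda>w. X i w - f w)" by auto
      have t: "?kn (\<lambda>w. X i w - f w) \<le> ?kn (\<lambda>w. X i w - Y k w) + ?kn (\<lambda>w. Y k w - f w)"
        using kd_add[OF pb a b] unfolding eq by blast
      have p1: "?kn (\<lambda>w. X i w - Y k w) < (1/2)^k"
        using N[of k i "r k"] le_trans[OF rN[of k] i] rN[of k] unfolding Y_def by blast
      have p2: "?kn (\<lambda>w. Y k w - f w) \<le> 2 * (1/2)^k"
      proof -
        have h: "?kn (\<lambda>w. (-1) * (f w - Y k w)) = \<bar>-1\<bar> * ?kn (\<lambda>w. f w - Y k w)"
          using kd_homog[OF pb] fk by blast
        have eq2: "(\<lambda>w. (-1) * (f w - Y k w)) = (\<lambda>w. Y k w - f w)" by auto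
        have "?kn (\<lambda>w. Y k w - f w) = ?kn (\<lambda>w. f w - Y k w)" using h unfolding eq2 by simp
        then show ?thesis using fk[of k] by linarith
      qed
      have "?kn (\<lambda>w. X i w - f w) < 3 * (1/2)^k" using t p1 p2 by linarith
      then show ?thesis using knorm_nonneg[OF c] k by simp
    qed
    then show "\<exists>no. \<forall>i\<ge>no. norm (?kn (\<lambda>w. X i w - f w) - 0) < e" by blast
  qed
  then show ?thesis using fK by blast
qed



lemma oc_elem_iff: "oc_elem M E x \<longleftrightarrow> (\<forall>D. D \<subseteq> borel_measurable M \<longrightarrow> D \<noteq> {} \<longrightarrow>
      (\<forall>a\<in>D. \<forall>b\<in>D. \<exists>c\<in>D. (AE w in M. c w \<le> a w) \<and> (AE w in M. c w \<le> b w)) \<longrightarrow>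
      (\<forall>d\<in>D. AE w in M. 0 \<le> d w \<and> d w \<le> \<bar>x w\<bar>) \<longrightarrow>
      (\<forall>z\<in>borel_measurable M. (\<forall>d\<in>D. AE w in M. z w \<le> d w) \<longrightarrow> (AE w in M. z w \<le> 0))
      \<longrightarrow> (\<forall>e>0. \<exists>d\<in>D. snd E d < e))"
  unfolding oc_elem_def by blast

lemma oc_elem_snd: "snd E = snd F \<Longrightarrow> oc_elem M E = oc_elem M F"
  unfolding oc_elem_def by (intro ext) simp

lemma aux_maxle: "0 \<le> (d::real) \<and> d \<le> \<bar>x + y\<bar> \<Longrightarrow> 0 \<le> max (d - \<bar>x\<bar>) 0 \<and> max (d - \<bar>x\<bar>) 0 \<le> \<bar>y\<bar>"
  unfolding max_def using abs_triangle_ineq[of x y] by auto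

lemma aux_maxle': "0 \<le> (d::real) \<and> d \<le> \<bar>x + y\<bar> \<Longrightarrow> \<bar>max (d - \<bar>x\<bar>) 0\<bar> \<le> \<bar>y\<bar>"
  unfolding max_def using abs_triangle_ineq[of x y] by auto

lemma aux_maxle2: "0 \<le> (d::real) \<and> d \<le> \<bar>x\<bar> \<Longrightarrow> \<bar>max (d - \<bar>X\<bar>) 0\<bar> \<le> \<bar>X - x\<bar>"
  unfolding max_def using abs_triangle_ineq2[of X x] by auto

lemma oc_elemD:
  assumes "oc_elem M E x" "D \<subseteq> borel_measurable M" "D \<noteq> {}"
    "\<forall>a\<in>D. \<forall>b\<in>D. \<exists>c\<in>D. (AE w in M. c w \<le> a w) \<and> (AE w in M. c w \<le> b w)"
    "\<forall>d\<in>D. AE w in M. 0 \<le> d w \<and> d w \<le> \<bar>x w\<bar>"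
    "\<forall>z\<in>borel_measurable M. (\<forall>d\<in>D. AE w in M. z w \<le> d w) \<longrightarrow> (AE w in M. z w \<le> 0)"
    "0 < e"
  shows "\<exists>d\<in>D. snd E d < e"
  using assms unfolding oc_elem_def by blast

lemma oc_elemI:
  assumes "\<And>D e. D \<subseteq> borel_measurable M \<Longrightarrow> D \<noteq> {} \<Longrightarrow>
    (\<forall>a\<in>D. \<forall>b\<in>D. \<exists>c\<in>D. (AE w in M. c w \<le> a w) \<and> (AE w in M. c w \<le> b w)) \<Longrightarrow>
    (\<forall>d\<in>D. AE w in M. 0 \<le> d w \<and> d w \<le> \<bar>x w\<bar>) \<Longrightarrow>
    (\<forall>z\<in>borel_measurable M. (\<forall>d\<in>D. AE w in M. z w \<le> d w) \<longrightarrow> (AE w in M. z w \<le> 0)) \<Longrightarrow>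
    0 < e \<Longrightarrow> \<exists>d\<in>D. snd E d < e"
  shows "oc_elem M E x"
  using assms unfolding oc_elem_def by blast

lemma oc_mono:
  assumes x: "oc_elem M E x" and le: "AE w in M. \<bar>y w\<bar> \<le> \<bar>x w\<bar>"
  shows "oc_elem M E y"
proof (rule oc_elemI)
  fix D :: "('a \<Rightarrow> real) set" and e :: real
  assume D: "D \<subseteq> borel_measurable M" "D \<noteq> {}"
    "\<forall>a\<in>D. \<forall>b\<in>D. \<exists>c\<in>D. (AE w in M. c w \<le> a w) \<and> (AE w in M. c w \<le> b w)"
    "\<forall>d\<in>D. AE w in M. 0 \<le> d w \<and> d w \<le> \<bar>y w\<bar>"
    "\<forall>z\<in>borel_measurable M. (\<forall>d\<in>D. AE w in M. z w \<le> d w) \<longrightarrow> (AE w in M. z w \<le> 0)"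
    and e: "0 < e"
  have "\<forall>d\<in>D. AE w in M. 0 \<le> d w \<and> d w \<le> \<bar>x w\<bar>"
  proof
    fix d assume "d \<in> D"
    with D(4) have "AE w in M. 0 \<le> d w \<and> d w \<le> \<bar>y w\<bar>" by blast
    then show "AE w in M. 0 \<le> d w \<and> d w \<le> \<bar>x w\<bar>" using le by eventually_elim auto
  qed
  then show "\<exists>d\<in>D. snd E d < e" by (rule oc_elemD[OF x D(1-3) _ D(5) e])
qed

context
  fixes M :: "'a measure" and E :: "'a bis"
  assumes bis: "is_bis M E"
begin

lemma b_meas: "x \<in> fst E \<Longrightarrow> x \<in> borel_measurable M"
  using bis unfolding is_bis_iff by blast
lemma b_zero: "(\<lambda>_. 0) \<in> fst E"
  using bis unfolding is_bis_iff by blast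
lemma b_add: "x \<in> fst E \<Longrightarrow> y \<in> fst E \<Longrightarrow> (\<lambda>w. x w + y w) \<in> fst E"
  using bis unfolding is_bis_iff by blast
lemma b_scale: "x \<in> fst E \<Longrightarrow> (\<lambda>w. c * x w) \<in> fst E"
  using bis unfolding is_bis_iff by blast
lemma b_nonneg: "x \<in> fst E \<Longrightarrow> 0 \<le> snd E x"
  using bis unfolding is_bis_iff by blast
lemma b_tri: "x \<in> fst E \<Longrightarrow> y \<in> fst E \<Longrightarrow> snd E (\<lambda>w. x w + y w) \<le> snd E x + snd E y"
  using bis unfolding is_bis_iff by blast
lemma b_homog: "x \<in> fst E \<Longrightarrow> snd E (\<lambda>w. c * x w) = \<bar>c\<bar> * snd E x"
  using bis unfolding is_bis_iff by blast
lemma b_ideal: "y \<in> fst E \<Longrightarrow> x \<in> borel_measurable M \<Longrightarrow> (AE w in M. \<bar>x w\<bar> \<le> \<bar>y w\<bar>) \<Longrightarrow> x \<in> fst E \<and> snd E x \<le> snd E y"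
  using bis unfolding is_bis_iff by blast

lemma b_zero_norm: "snd E (\<lambda>_. 0) = 0"
  using b_homog[OF b_zero, of 0] by simp

lemma oc_zero: "oc_elem M E (\<lambda>_. 0)"
proof (rule oc_elemI)
  fix D :: "('a \<Rightarrow> real) set" and e :: real
  assume D: "D \<subseteq> borel_measurable M" "D \<noteq> {}"
    "\<forall>d\<in>D. AE w in M. 0 \<le> d w \<and> d w \<le> \<bar>(\<lambda>_. 0::real) w\<bar>"
    and e: "0 < e"
  obtain d where d: "d \<in> D" using D(2) by blast
  have "AE w in M. 0 \<le> d w \<and> d w \<le> \<bar>(\<lambda>_. 0::real) w\<bar>" using D(3) d by blast
  then have "AE w in M. \<bar>d w\<bar> \<le> \<bar>(\<lambda>_. 0::real) w\<bar>" by eventually_elim auto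
  then have "snd E d \<le> snd E (\<lambda>_. 0)" using b_ideal[OF b_zero, of d] D(1) d by auto
  then show "\<exists>d\<in>D. snd E d < e" using d e b_zero_norm by (intro bexI[of _ d]) auto
qed

lemma oc_add:
  assumes x: "x \<in> fst E" and y: "y \<in> fst E" and ox: "oc_elem M E x" and oy: "oc_elem M E y"
  shows "oc_elem M E (\<lambda>w. x w + y w)"
proof (rule oc_elemI)
  fix D :: "('a \<Rightarrow> real) set" and e :: real
  assume Dm: "D \<subseteq> borel_measurable M" and Dne: "D \<noteq> {}"
    and dir: "\<forall>a\<in>D. \<forall>b\<in>D. \<exists>c\<in>D. (AE w in M. c w \<le> a w) \<and> (AE w in M. c w \<le> b w)"
    and bnd: "\<forall>d\<in>D. AE w in M. 0 \<le> d w \<and> d w \<le> \<bar>x w + y w\<bar>"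
    and inf: "\<forall>z\<in>borel_measurable M. (\<forall>d\<in>D. AE w in M. z w \<le> d w) \<longrightarrow> (AE w in M. z w \<le> 0)"
    and e: "0 < e"
  have xm: "x \<in> borel_measurable M" and ym: "y \<in> borel_measurable M" using b_meas x y by auto
  define D1 where "D1 = (\<lambda>d w. min (d w) \<bar>x w\<bar>) ` D"
  define D2 where "D2 = (\<lambda>d w. max (d w - \<bar>x w\<bar>) 0) ` D"
  have "\<exists>d'\<in>D1. snd E d' < e/2"
  proof -
    have "D1 \<subseteq> borel_measurable M" using Dm xm unfolding D1_def by auto
    moreover have "D1 \<noteq> {}" using Dne unfolding D1_def by auto
    moreover have "\<forall>a\<in>D1. \<forall>b\<in>D1. \<exists>c\<in>D1. (AE w in M. c w \<le> a w) \<and> (AE w in M. c w \<le> b w)"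
    proof (intro ballI)
      fix a' b' assume "a' \<in> D1" "b' \<in> D1"
      then obtain a b where ab: "a \<in> D" "b \<in> D" "a' = (\<lambda>w. min (a w) \<bar>x w\<bar>)" "b' = (\<lambda>w. min (b w) \<bar>x w\<bar>)"
        unfolding D1_def by auto
      then obtain c where c: "c \<in> D" "AE w in M. c w \<le> a w" "AE w in M. c w \<le> b w" using dir by blast
      have m: "(\<lambda>w. min (c w) \<bar>x w\<bar>) \<in> D1" using c(1) unfolding D1_def by blast
      have h1: "AE w in M. min (c w) \<bar>x w\<bar> \<le> a' w" using c(2) by eventually_elim (auto simp: ab)
      have h2: "AE w in M. min (c w) \<bar>x w\<bar> \<le> b' w" using c(3) by eventually_elim (auto simp: ab)
      show "\<exists>c\<in>D1. (AE w in M. c w \<le> a' w) \<and> (AE w in M. c w \<le> b' w)" using m h1 h2 by (intro bexI[of _ "(\<lambda>w. min (c w) \<bar>x w\<bar>)"] conjI)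
    qed
    moreover have "\<forall>d\<in>D1. AE w in M. 0 \<le> d w \<and> d w \<le> \<bar>x w\<bar>"
    proof
      fix d' assume "d' \<in> D1"
      then obtain d where d: "d \<in> D" "d' = (\<lambda>w. min (d w) \<bar>x w\<bar>)" unfolding D1_def by blast
      have "AE w in M. 0 \<le> d w \<and> d w \<le> \<bar>x w + y w\<bar>" using bnd d(1) by blast
      then show "AE w in M. 0 \<le> d' w \<and> d' w \<le> \<bar>x w\<bar>" unfolding d(2) by eventually_elim simp
    qed
    moreover have "\<forall>z\<in>borel_measurable M. (\<forall>d\<in>D1. AE w in M. z w \<le> d w) \<longrightarrow> (AE w in M. z w \<le> 0)"
    proof (intro ballI impI)
      fix z :: "'a \<Rightarrow> real" assume zm: "z \<in> borel_measurable M" and h: "\<forall>d\<in>D1. AE w in M. z w \<le> d w"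
      have "\<forall>d\<in>D. AE w in M. z w \<le> d w"
      proof
        fix d assume d: "d \<in> D"
        then have "AE w in M. z w \<le> min (d w) \<bar>x w\<bar>" using h unfolding D1_def by auto
        then show "AE w in M. z w \<le> d w" by eventually_elim auto
      qed
      then show "AE w in M. z w \<le> 0" using inf zm by blast
    qed
    ultimately show ?thesis using half_gt_zero[OF e] by (rule oc_elemD[OF ox])
  qed
  then obtain d1 where d1: "d1 \<in> D" "snd E (\<lambda>w. min (d1 w) \<bar>x w\<bar>) < e/2" unfolding D1_def by auto
  have "\<exists>d'\<in>D2. snd E d' < e/2"
  proof -
    have "D2 \<subseteq> borel_measurable M" using Dm xm unfolding D2_def by auto
    moreover have "D2 \<noteq> {}" using Dne unfolding D2_def by auto
    moreover have "\<forall>a\<in>D2. \<forall>b\<in>D2. \<exists>c\<in>D2. (AE w in M. c w \<le> a w) \<and> (AE w in M. c w \<le> b w)"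
    proof (intro ballI)
      fix a' b' assume "a' \<in> D2" "b' \<in> D2"
      then obtain a b where ab: "a \<in> D" "b \<in> D" "a' = (\<lambda>w. max (a w - \<bar>x w\<bar>) 0)" "b' = (\<lambda>w. max (b w - \<bar>x w\<bar>) 0)"
        unfolding D2_def by auto
      then obtain c where c: "c \<in> D" "AE w in M. c w \<le> a w" "AE w in M. c w \<le> b w" using dir by blast
      have m: "(\<lambda>w. max (c w - \<bar>x w\<bar>) 0) \<in> D2" using c(1) unfolding D2_def by blast
      have h1: "AE w in M. max (c w - \<bar>x w\<bar>) 0 \<le> a' w" using c(2) by eventually_elim (auto simp: ab)
      have h2: "AE w in M. max (c w - \<bar>x w\<bar>) 0 \<le> b' w" using c(3) by eventually_elim (auto simp: ab)
      show "\<exists>c\<in>D2. (AE w in M. c w \<le> a' w) \<and> (AE w in M. c w \<le> b' w)" using m h1 h2 by (intro bexI[of _ "(\<lambda>w. max (c w - \<bar>x w\<bar>) 0)"] conjI)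
    qed
    moreover have "\<forall>d\<in>D2. AE w in M. 0 \<le> d w \<and> d w \<le> \<bar>y w\<bar>"
    proof
      fix d' assume "d' \<in> D2"
      then obtain d where d: "d \<in> D" "d' = (\<lambda>w. max (d w - \<bar>x w\<bar>) 0)" unfolding D2_def by blast
      have "AE w in M. 0 \<le> d w \<and> d w \<le> \<bar>x w + y w\<bar>" using bnd d(1) by blast
      then show "AE w in M. 0 \<le> d' w \<and> d' w \<le> \<bar>y w\<bar>" unfolding d(2) by eventually_elim (rule aux_maxle)
    qed
    moreover have "\<forall>z\<in>borel_measurable M. (\<forall>d\<in>D2. AE w in M. z w \<le> d w) \<longrightarrow> (AE w in M. z w \<le> 0)"
    proof (intro ballI impI)
      fix z :: "'a \<Rightarrow> real" assume zm: "z \<in> borel_measurable M" and h: "\<forall>d\<in>D2. AE w in M. z w \<le> d w"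
      have "\<forall>d\<in>D. AE w in M. z w \<le> d w"
      proof
        fix d assume d: "d \<in> D"
        then have "AE w in M. z w \<le> max (d w - \<bar>x w\<bar>) 0" using h unfolding D2_def by auto
        moreover have "AE w in M. 0 \<le> d w \<and> d w \<le> \<bar>x w + y w\<bar>" using bnd d by blast
        ultimately show "AE w in M. z w \<le> d w" by eventually_elim auto
      qed
      then show "AE w in M. z w \<le> 0" using inf zm by blast
    qed
    ultimately show ?thesis using half_gt_zero[OF e] by (rule oc_elemD[OF oy])
  qed
  then obtain d2 where d2: "d2 \<in> D" "snd E (\<lambda>w. max (d2 w - \<bar>x w\<bar>) 0) < e/2" unfolding D2_def by auto
  obtain c where c: "c \<in> D" "AE w in M. c w \<le> d1 w" "AE w in M. c w \<le> d2 w" using dir d1(1) d2(1) by blast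
  have cm: "c \<in> borel_measurable M" using Dm c(1) by auto
  have d1m: "d1 \<in> borel_measurable M" using Dm d1(1) by auto
  have d2m: "d2 \<in> borel_measurable M" using Dm d2(1) by auto
  have cb: "AE w in M. 0 \<le> c w \<and> c w \<le> \<bar>x w + y w\<bar>" using bnd c(1) by blast
  have d1b: "AE w in M. 0 \<le> d1 w \<and> d1 w \<le> \<bar>x w + y w\<bar>" using bnd d1(1) by blast
  have d2b: "AE w in M. 0 \<le> d2 w \<and> d2 w \<le> \<bar>x w + y w\<bar>" using bnd d2(1) by blast
  have mm1: "(\<lambda>w. min (d1 w) \<bar>x w\<bar>) \<in> borel_measurable M" using d1m xm by measurable
  have mm2: "(\<lambda>w. max (d2 w - \<bar>x w\<bar>) 0) \<in> borel_measurable M" using d2m xm by measurable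
  have mmc: "(\<lambda>w. min (c w) \<bar>x w\<bar>) \<in> borel_measurable M" using cm xm by measurable
  have "AE w in M. \<bar>min (d1 w) \<bar>x w\<bar>\<bar> \<le> \<bar>x w\<bar>" using d1b by eventually_elim auto
  then have m1: "(\<lambda>w. min (d1 w) \<bar>x w\<bar>) \<in> fst E" using b_ideal[OF x mm1] by blast
  have "AE w in M. \<bar>max (d2 w - \<bar>x w\<bar>) 0\<bar> \<le> \<bar>y w\<bar>" using d2b by eventually_elim (rule aux_maxle')
  then have m2: "(\<lambda>w. max (d2 w - \<bar>x w\<bar>) 0) \<in> fst E" using b_ideal[OF y mm2] by blast
  have "AE w in M. \<bar>min (c w) \<bar>x w\<bar>\<bar> \<le> \<bar>min (d1 w) \<bar>x w\<bar>\<bar>" using c(2) cb d1b by eventually_elim auto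
  then have c1: "(\<lambda>w. min (c w) \<bar>x w\<bar>) \<in> fst E \<and> snd E (\<lambda>w. min (c w) \<bar>x w\<bar>) \<le> snd E (\<lambda>w. min (d1 w) \<bar>x w\<bar>)"
    using b_ideal[OF m1 mmc] by blast
  have c2: "(\<lambda>w. max (c w - \<bar>x w\<bar>) 0) \<in> fst E \<and> snd E (\<lambda>w. max (c w - \<bar>x w\<bar>) 0) \<le> snd E (\<lambda>w. max (d2 w - \<bar>x w\<bar>) 0)"
  proof (rule b_ideal[OF m2])
    show "(\<lambda>w. max (c w - \<bar>x w\<bar>) 0) \<in> borel_measurable M" using cm xm by measurable
    show "AE w in M. \<bar>max (c w - \<bar>x w\<bar>) 0\<bar> \<le> \<bar>max (d2 w - \<bar>x w\<bar>) 0\<bar>" using c(3) by eventually_elim auto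
  qed
  have "snd E (\<lambda>w. min (c w) \<bar>x w\<bar> + max (c w - \<bar>x w\<bar>) 0) \<le> snd E (\<lambda>w. min (c w) \<bar>x w\<bar>) + snd E (\<lambda>w. max (c w - \<bar>x w\<bar>) 0)"
    using b_tri c1 c2 by blast
  moreover have "(\<lambda>w. min (c w) \<bar>x w\<bar> + max (c w - \<bar>x w\<bar>) 0) = c" by (auto simp: min_def max_def)
  ultimately have "snd E c < e" using c1 c2 d1(2) d2(2) by simp
  then show "\<exists>d\<in>D. snd E d < e" using c(1) by blast
qed

lemma oc_scale:
  assumes x: "x \<in> fst E" and ox: "oc_elem M E x"
  shows "oc_elem M E (\<lambda>w. c * x w)"
proof -
  have xm: "x \<in> borel_measurable M" using b_meas x by auto
  have ax: "(\<lambda>w. \<bar>x w\<bar>) \<in> fst E" using b_ideal[OF x, of "\<lambda>w. \<bar>x w\<bar>"] xm by auto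
  have oax: "oc_elem M E (\<lambda>w. \<bar>x w\<bar>)" by (rule oc_mono[OF ox]) auto
  have k: "oc_elem M E (\<lambda>w. real k * \<bar>x w\<bar>)" for k
  proof (induction k)
    case 0
    show ?case by (rule oc_mono[OF ox]) auto
  next
    case (Suc k)
    have "oc_elem M E (\<lambda>w. \<bar>x w\<bar> + real k * \<bar>x w\<bar>)"
      by (rule oc_add[OF ax b_scale[OF ax] oax Suc])
    moreover have "(\<lambda>w. \<bar>x w\<bar> + real k * \<bar>x w\<bar>) = (\<lambda>w. real (Suc k) * \<bar>x w\<bar>)"
      by (auto simp: algebra_simps)
    ultimately show ?case by simp
  qed
  show ?thesis
  proof (rule oc_mono[OF k[of "nat \<lceil>\<bar>c\<bar>\<rceil>"]])
    have "\<bar>c\<bar> \<le> real (nat \<lceil>\<bar>c\<bar>\<rceil>)" by (rule real_nat_ceiling_ge)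
    then show "AE w in M. \<bar>c * x w\<bar> \<le> \<bar>real (nat \<lceil>\<bar>c\<bar>\<rceil>) * \<bar>x w\<bar>\<bar>"
      by (auto simp: abs_mult intro!: mult_right_mono)
  qed
qed

lemma oc_closed:
  assumes X: "\<And>k. X k \<in> fst E" and oX: "\<And>k. oc_elem M E (X k)" and x: "x \<in> fst E"
    and lim: "(\<lambda>k. snd E (\<lambda>w. X k w - x w)) \<longlonglongrightarrow> 0"
  shows "oc_elem M E x"
proof (rule oc_elemI)
  fix D :: "('a \<Rightarrow> real) set" and e :: real
  assume Dm: "D \<subseteq> borel_measurable M" and Dne: "D \<noteq> {}"
    and dir: "\<forall>a\<in>D. \<forall>b\<in>D. \<exists>c\<in>D. (AE w in M. c w \<le> a w) \<and> (AE w in M. c w \<le> b w)"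
    and bnd: "\<forall>d\<in>D. AE w in M. 0 \<le> d w \<and> d w \<le> \<bar>x w\<bar>"
    and inf: "\<forall>z\<in>borel_measurable M. (\<forall>d\<in>D. AE w in M. z w \<le> d w) \<longrightarrow> (AE w in M. z w \<le> 0)"
    and e: "0 < e"
  have xm: "x \<in> borel_measurable M" using b_meas x by auto
  obtain k where k: "snd E (\<lambda>w. X k w - x w) < e/2"
    using lim e unfolding LIMSEQ_def dist_real_def by (metis abs_less_iff diff_zero half_gt_zero order_refl)
  have Xm: "X k \<in> borel_measurable M" using b_meas X by auto
  define D1 where "D1 = (\<lambda>d w. min (d w) \<bar>X k w\<bar>) ` D"
  have "\<exists>d'\<in>D1. snd E d' < e/2"
  proof -
    have "D1 \<subseteq> borel_measurable M" using Dm Xm unfolding D1_def by auto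
    moreover have "D1 \<noteq> {}" using Dne unfolding D1_def by auto
    moreover have "\<forall>a\<in>D1. \<forall>b\<in>D1. \<exists>c\<in>D1. (AE w in M. c w \<le> a w) \<and> (AE w in M. c w \<le> b w)"
    proof (intro ballI)
      fix a' b' assume "a' \<in> D1" "b' \<in> D1"
      then obtain a b where ab: "a \<in> D" "b \<in> D" "a' = (\<lambda>w. min (a w) \<bar>X k w\<bar>)" "b' = (\<lambda>w. min (b w) \<bar>X k w\<bar>)"
        unfolding D1_def by auto
      then obtain c where c: "c \<in> D" "AE w in M. c w \<le> a w" "AE w in M. c w \<le> b w" using dir by blast
      have m: "(\<lambda>w. min (c w) \<bar>X k w\<bar>) \<in> D1" using c(1) unfolding D1_def by blast
      have h1: "AE w in M. min (c w) \<bar>X k w\<bar> \<le> a' w" using c(2) by eventually_elim (auto simp: ab)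
      have h2: "AE w in M. min (c w) \<bar>X k w\<bar> \<le> b' w" using c(3) by eventually_elim (auto simp: ab)
      show "\<exists>c\<in>D1. (AE w in M. c w \<le> a' w) \<and> (AE w in M. c w \<le> b' w)" using m h1 h2 by (intro bexI[of _ "(\<lambda>w. min (c w) \<bar>X k w\<bar>)"] conjI)
    qed
    moreover have "\<forall>d\<in>D1. AE w in M. 0 \<le> d w \<and> d w \<le> \<bar>X k w\<bar>"
    proof
      fix d' assume "d' \<in> D1"
      then obtain d where d: "d \<in> D" "d' = (\<lambda>w. min (d w) \<bar>X k w\<bar>)" unfolding D1_def by blast
      have "AE w in M. 0 \<le> d w \<and> d w \<le> \<bar>x w\<bar>" using bnd d(1) by blast
      then show "AE w in M. 0 \<le> d' w \<and> d' w \<le> \<bar>X k w\<bar>" unfolding d(2) by eventually_elim simp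
    qed
    moreover have "\<forall>z\<in>borel_measurable M. (\<forall>d\<in>D1. AE w in M. z w \<le> d w) \<longrightarrow> (AE w in M. z w \<le> 0)"
    proof (intro ballI impI)
      fix z :: "'a \<Rightarrow> real" assume zm: "z \<in> borel_measurable M" and h: "\<forall>d\<in>D1. AE w in M. z w \<le> d w"
      have "\<forall>d\<in>D. AE w in M. z w \<le> d w"
      proof
        fix d assume d: "d \<in> D"
        then have "AE w in M. z w \<le> min (d w) \<bar>X k w\<bar>" using h unfolding D1_def by auto
        then show "AE w in M. z w \<le> d w" by eventually_elim auto
      qed
      then show "AE w in M. z w \<le> 0" using inf zm by blast
    qed
    ultimately show ?thesis using half_gt_zero[OF e] by (rule oc_elemD[OF oX[of k]])
  qed
  then obtain d where d: "d \<in> D" "snd E (\<lambda>w. min (d w) \<bar>X k w\<bar>) < e/2" unfolding D1_def by auto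
  have dm: "d \<in> borel_measurable M" using Dm d(1) by auto
  have db: "AE w in M. 0 \<le> d w \<and> d w \<le> \<bar>x w\<bar>" using bnd d(1) by blast
  have dX: "(\<lambda>w. X k w - x w) \<in> fst E" using b_add[OF X b_scale[OF x, of "-1"]] by simp
  have mm1: "(\<lambda>w. min (d w) \<bar>X k w\<bar>) \<in> borel_measurable M" using dm Xm by measurable
  have "AE w in M. \<bar>min (d w) \<bar>X k w\<bar>\<bar> \<le> \<bar>X k w\<bar>" using db by eventually_elim auto
  then have m1: "(\<lambda>w. min (d w) \<bar>X k w\<bar>) \<in> fst E" using b_ideal[OF X[of k] mm1] by blast
  have m2: "(\<lambda>w. max (d w - \<bar>X k w\<bar>) 0) \<in> fst E \<and> snd E (\<lambda>w. max (d w - \<bar>X k w\<bar>) 0) \<le> snd E (\<lambda>w. X k w - x w)"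
  proof (rule b_ideal[OF dX])
    show "(\<lambda>w. max (d w - \<bar>X k w\<bar>) 0) \<in> borel_measurable M" using dm Xm by measurable
    show "AE w in M. \<bar>max (d w - \<bar>X k w\<bar>) 0\<bar> \<le> \<bar>X k w - x w\<bar>" using db by eventually_elim (rule aux_maxle2)
  qed
  have "snd E (\<lambda>w. min (d w) \<bar>X k w\<bar> + max (d w - \<bar>X k w\<bar>) 0) \<le> snd E (\<lambda>w. min (d w) \<bar>X k w\<bar>) + snd E (\<lambda>w. max (d w - \<bar>X k w\<bar>) 0)"
    using b_tri m1 m2 by blast
  moreover have "(\<lambda>w. min (d w) \<bar>X k w\<bar> + max (d w - \<bar>X k w\<bar>) 0) = d" by (auto simp: min_def max_def)
  ultimately have "snd E d < e" using m2 d(2) k by simp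
  then show "\<exists>d\<in>D. snd E d < e" using d(1) by blast
qed

end



lemma b_zero_ae: "is_bis M E \<Longrightarrow> x \<in> fst E \<Longrightarrow> snd E x = 0 \<Longrightarrow> AE w in M. x w = 0"
  using pb_zero_ae[OF is_bis_pre] by blast

lemma foundation_pre:
  assumes bis: "is_bis M E" and fd: "foundation M G (fst E)"
  shows "pre_bis M G (snd E)"
proof -
  have GS: "G \<subseteq> fst E" using fd unfolding foundation_def by blast
  show ?thesis unfolding pre_bis_def
  proof (intro conjI)
    show "G \<subseteq> borel_measurable M" using GS b_meas[OF bis] by blast
    show "\<forall>x\<in>G. \<forall>c. (\<lambda>w. c * x w) \<in> G" using fd unfolding foundation_def by blast
    show "\<forall>x\<in>G. 0 \<le> snd E x" using b_nonneg[OF bis] GS by blast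
    show "\<forall>x\<in>G. snd E x = 0 \<longrightarrow> (AE w in M. x w = 0)" using b_zero_ae[OF bis] GS by blast
    show "\<forall>x\<in>G. \<forall>c. snd E (\<lambda>w. c * x w) = \<bar>c\<bar> * snd E x" using b_homog[OF bis] GS by blast
    show "\<forall>y\<in>G. \<forall>x\<in>borel_measurable M. (AE w in M. \<bar>x w\<bar> \<le> \<bar>y w\<bar>) \<longrightarrow> x \<in> G \<and> snd E x \<le> snd E y"
    proof (intro ballI impI)
      fix y x assume y: "y \<in> G" and xm: "x \<in> borel_measurable M" and le: "AE w in M. \<bar>x w\<bar> \<le> \<bar>y w\<bar>"
      have xE: "x \<in> fst E" and nle: "snd E x \<le> snd E y" using b_ideal[OF bis _ xm le] y GS by blast+
      have "x \<in> G" using fd y le xE unfolding foundation_def by blast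
      then show "x \<in> G \<and> snd E x \<le> snd E y" using nle by blast
    qed
  qed
qed

lemma key_density:
  assumes bis: "is_bis M E" and fd: "foundation M G (fst E)"
    and hm: "h \<in> borel_measurable M" and x: "x \<in> fst E"
    and C: "\<And>y. y \<in> G \<Longrightarrow> (\<forall>w\<in>space M. 0 \<le> y w \<and> y w \<le> \<bar>x w\<bar>) \<Longrightarrow>
              (\<integral>\<^sup>+w. ennreal \<bar>h w\<bar> * ennreal (y w) \<partial>M) \<le> C"
  shows "(\<integral>\<^sup>+w. ennreal \<bar>h w\<bar> * ennreal \<bar>x w\<bar> \<partial>M) \<le> C"
proof (cases "C = \<infinity>")
  case True then show ?thesis by simp
next
  case Cfin: False
  have GS: "G \<subseteq> fst E" using fd unfolding foundation_def by blast
  have xm: "x \<in> borel_measurable M" using b_meas[OF bis x] .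
  have Gm: "y \<in> borel_measurable M" if "y \<in> G" for y using GS b_meas[OF bis] that by blast
  define T where "T = {y \<in> G. \<forall>w\<in>space M. 0 \<le> y w \<and> y w \<le> \<bar>x w\<bar>}"
  have Tdom: "v \<in> T" if vm: "v \<in> borel_measurable M" and vb: "\<forall>w\<in>space M. 0 \<le> v w \<and> v w \<le> \<bar>x w\<bar>"
    and y: "y \<in> G" and le: "AE w in M. \<bar>v w\<bar> \<le> \<bar>y w\<bar>" for v y
  proof -
    have "v \<in> fst E" using b_ideal[OF bis _ vm le] y GS by blast
    then have "v \<in> G" using fd y le unfolding foundation_def by blast
    then show ?thesis using vb unfolding T_def by blast
  qed
  have Tmax: "(\<lambda>w. max (a w) (b w)) \<in> T" if a: "a \<in> T" and b: "b \<in> T" for a b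
  proof (rule Tdom)
    show "(\<lambda>w. max (a w) (b w)) \<in> borel_measurable M" using a b Gm unfolding T_def by auto
    show "\<forall>w\<in>space M. 0 \<le> max (a w) (b w) \<and> max (a w) (b w) \<le> \<bar>x w\<bar>" using a b unfolding T_def by auto
    show "(\<lambda>w. a w + b w) \<in> G" using fd a b unfolding foundation_def T_def by blast
    show "AE w in M. \<bar>max (a w) (b w)\<bar> \<le> \<bar>a w + b w\<bar>"
      using a b unfolding T_def by (auto intro!: AE_I2)
  qed
  have T0: "(\<lambda>_. 0) \<in> T" using fd unfolding foundation_def T_def by auto
  define \<Phi> where "\<Phi> y = (\<integral>\<^sup>+w. ennreal \<bar>h w\<bar> * ennreal (y w) \<partial>M)" for y
  define s where "s = Sup (\<Phi> ` T)"
  have sC: "s \<le> C" unfolding s_def \<Phi>_def using C by (auto simp: T_def intro!: Sup_least)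
  have Phi_s: "\<Phi> y \<le> s" if "y \<in> T" for y unfolding s_def using that by (auto intro!: Sup_upper)
  obtain Ys :: "nat \<Rightarrow> ennreal" where Ys: "range Ys \<subseteq> \<Phi> ` T" "s = Sup (range Ys)"
    using ennreal_SUP_countable_SUP[of T \<Phi>] T0 unfolding s_def by blast
  have "\<forall>i::nat. \<exists>y. y \<in> T \<and> Ys i = \<Phi> y" using Ys(1) by blast
  from choice[OF this] obtain ys where ys0: "\<forall>i. ys i \<in> T \<and> Ys i = \<Phi> (ys i)" by blast
  then have ys: "\<And>i. ys i \<in> T" "\<And>i. Ys i = \<Phi> (ys i)" by auto
  define u where "u = rec_nat (ys 0) (\<lambda>n v w. max (v w) (ys (Suc n) w))"
  have u0: "u 0 = ys 0" and uS: "u (Suc n) = (\<lambda>w. max (u n w) (ys (Suc n) w))" for n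
    by (simp_all add: u_def)
  have uT: "u n \<in> T" for n
    by (induction n) (auto simp: u0 uS ys intro!: Tmax)
  have um: "u n \<in> borel_measurable M" for n using uT[of n] Gm unfolding T_def by auto
  have ymono: "ys n w \<le> u n w" for n w by (cases n) (auto simp: u0 uS)
  have uinc: "u n w \<le> u (Suc n) w" for n w by (simp add: uS)
  have uinc': "u m w \<le> u n w" if "m \<le> n" for m n w
    using that by (induction n) (auto simp: le_Suc_eq intro: order_trans[OF _ uinc])
  have ubnd: "u n w \<le> \<bar>x w\<bar>" "0 \<le> u n w" if "w \<in> space M" for n w using uT[of n] that unfolding T_def by auto
  define U where "U w = (SUP n. ennreal (u n w))" for w
  have Um: "U \<in> borel_measurable M" unfolding U_def using um by measurable
  have UB: "U w \<le> ennreal \<bar>x w\<bar>" if "w \<in> space M" for w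
    unfolding U_def using ubnd[OF that] by (auto intro!: SUP_least ennreal_leI)
  define I where "I = (\<integral>\<^sup>+w. ennreal \<bar>h w\<bar> * U w \<partial>M)"
  have I_eq: "I = (SUP n. \<Phi> (u n))"
  proof -
    have "I = (\<integral>\<^sup>+w. (SUP n. ennreal \<bar>h w\<bar> * ennreal (u n w)) \<partial>M)"
      unfolding I_def U_def by (simp add: SUP_mult_left_ennreal)
    also have "\<dots> = (SUP n. \<Phi> (u n))"
      unfolding \<Phi>_def
    proof (rule nn_integral_monotone_convergence_SUP)
      show "incseq (\<lambda>n w. ennreal \<bar>h w\<bar> * ennreal (u n w))"
        by (auto simp: incseq_def le_fun_def intro!: mult_left_mono ennreal_leI uinc')
      show "(\<lambda>w. ennreal \<bar>h w\<bar> * ennreal (u n w)) \<in> borel_measurable M" for n using hm um by measurable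
    qed
    finally show ?thesis .
  qed
  have Is: "I = s"
  proof (rule antisym)
    show "I \<le> s" unfolding I_eq using Phi_s uT by (auto intro!: SUP_least)
    have "Ys n \<le> \<Phi> (u n)" for n
      unfolding ys(2) \<Phi>_def by (intro nn_integral_mono mult_left_mono ennreal_leI ymono) auto
    then show "s \<le> I" unfolding Ys(2) I_eq by (auto intro!: SUP_mono)
  qed
  have Ifin: "I \<noteq> \<infinity>" using Is sC Cfin by (auto simp: top_unique)
  have main: "AE w in M. ennreal \<bar>h w\<bar> * ennreal \<bar>x w\<bar> \<le> ennreal \<bar>h w\<bar> * U w"
  proof (rule ccontr)
    assume nAE: "\<not> (AE w in M. ennreal \<bar>h w\<bar> * ennreal \<bar>x w\<bar> \<le> ennreal \<bar>h w\<bar> * U w)"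
    define A where "A = {w \<in> space M. ennreal \<bar>h w\<bar> * U w < ennreal \<bar>h w\<bar> * ennreal \<bar>x w\<bar>}"
    have Am: "A \<in> sets M" unfolding A_def using hm Um xm by measurable
    define z :: "'a \<Rightarrow> real" where "z w = indicator A w" for w
    have zm: "(z :: 'a \<Rightarrow> real) \<in> borel_measurable M" unfolding z_def using Am by measurable
    have "\<not> (AE w in M. z w = 0)"
    proof
      assume "AE w in M. z w = 0"
      then have "AE w in M. ennreal \<bar>h w\<bar> * ennreal \<bar>x w\<bar> \<le> ennreal \<bar>h w\<bar> * U w"
        using AE_space by eventually_elim (auto simp: z_def A_def indicator_def not_less split: if_splits)
      with nAE show False by blast
    qed
    then obtain y0 where y0: "y0 \<in> G" and ny0: "\<not> (AE w in M. z w * y0 w = 0)"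
      using fd zm unfolding foundation_def max_width_def by blast
    have y0m: "y0 \<in> borel_measurable M" using Gm y0 .
    define v where "v k w = min \<bar>x w\<bar> (real k * \<bar>y0 w\<bar>)" for k w
    have vT: "v k \<in> T" for k
    proof (rule Tdom)
      show "v k \<in> borel_measurable M" unfolding v_def using xm y0m by measurable
      show "\<forall>w\<in>space M. 0 \<le> v k w \<and> v k w \<le> \<bar>x w\<bar>" by (auto simp: v_def)
      show "(\<lambda>w. real k * y0 w) \<in> G" using fd y0 unfolding foundation_def by blast
      show "AE w in M. \<bar>v k w\<bar> \<le> \<bar>real k * y0 w\<bar>" by (auto simp: v_def abs_mult intro!: AE_I2)
    qed
    have "\<exists>k. \<not> (AE w in M. w \<in> A \<longrightarrow> ennreal (v k w) \<le> U w)"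
    proof (rule ccontr)
      assume "\<not> ?thesis"
      then have "\<forall>k. AE w in M. w \<in> A \<longrightarrow> ennreal (v k w) \<le> U w" by blast
      then have "AE w in M. \<forall>k. w \<in> A \<longrightarrow> ennreal (v k w) \<le> U w" by (rule AE_all_countable[THEN iffD2])
      then have "AE w in M. z w * y0 w = 0"
      proof eventually_elim
        case (elim w)
        show ?case
        proof (rule ccontr)
          assume nz: "z w * y0 w \<noteq> 0"
          then have wA: "w \<in> A" and y0nz: "y0 w \<noteq> 0" by (auto simp: z_def indicator_def split: if_splits)
          obtain k :: nat where k: "\<bar>x w\<bar> / \<bar>y0 w\<bar> \<le> real k" using real_arch_simple by blast
          then have "\<bar>x w\<bar> \<le> real k * \<bar>y0 w\<bar>" using y0nz by (simp add: field_simps)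
          then have vx: "v k w = \<bar>x w\<bar>" by (simp add: v_def)
          have "ennreal (v k w) \<le> U w" using elim wA by blast
          then have "ennreal \<bar>x w\<bar> \<le> U w" using vx by simp
          then have "ennreal \<bar>h w\<bar> * ennreal \<bar>x w\<bar> \<le> ennreal \<bar>h w\<bar> * U w" by (rule mult_left_mono) simp
          then show False using wA unfolding A_def by auto
        qed
      qed
      with ny0 show False by blast
    qed
    then obtain k where nk: "\<not> (AE w in M. w \<in> A \<longrightarrow> ennreal (v k w) \<le> U w)" by blast
    define zz where "zz n w = max (u n w) (v k w)" for n w
    have zzT: "zz n \<in> T" for n unfolding zz_def by (rule Tmax[OF uT vT])
    have zzm: "zz n \<in> borel_measurable M" for n using zzT[of n] Gm unfolding T_def by auto
    define W where "W w = (SUP n. ennreal (zz n w))" for w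
    have Wm: "W \<in> borel_measurable M" unfolding W_def using zzm by measurable
    have UW: "U w \<le> W w" for w
      unfolding U_def W_def
    proof (rule SUP_mono)
      fix n show "\<exists>m\<in>UNIV. ennreal (u n w) \<le> ennreal (zz m w)"
        by (intro bexI[of _ n]) (auto simp: zz_def intro!: ennreal_leI)
    qed
    have vW: "ennreal (v k w) \<le> W w" for w
      unfolding W_def by (rule SUP_upper2[of 0]) (auto simp: zz_def intro!: ennreal_leI)
    have WI: "(\<integral>\<^sup>+w. ennreal \<bar>h w\<bar> * W w \<partial>M) \<le> I"
    proof -
      have "(\<integral>\<^sup>+w. ennreal \<bar>h w\<bar> * W w \<partial>M) = (\<integral>\<^sup>+w. (SUP n. ennreal \<bar>h w\<bar> * ennreal (zz n w)) \<partial>M)"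
        unfolding W_def by (simp add: SUP_mult_left_ennreal)
      also have "\<dots> = (SUP n. \<Phi> (zz n))"
        unfolding \<Phi>_def
      proof (rule nn_integral_monotone_convergence_SUP)
        show "incseq (\<lambda>n w. ennreal \<bar>h w\<bar> * ennreal (zz n w))"
          by (auto simp: incseq_def le_fun_def zz_def intro!: mult_left_mono ennreal_leI max.mono uinc')
        show "(\<lambda>w. ennreal \<bar>h w\<bar> * ennreal (zz n w)) \<in> borel_measurable M" for n using hm zzm by measurable
      qed
      also have "\<dots> \<le> s" using Phi_s zzT by (auto intro!: SUP_least)
      finally show ?thesis using Is by simp
    qed
    have AEle: "AE w in M. ennreal \<bar>h w\<bar> * W w \<le> ennreal \<bar>h w\<bar> * U w"
    proof (rule ccontr)
      assume nle: "\<not> (AE w in M. ennreal \<bar>h w\<bar> * W w \<le> ennreal \<bar>h w\<bar> * U w)"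
      have "I < (\<integral>\<^sup>+w. ennreal \<bar>h w\<bar> * W w \<partial>M)"
        unfolding I_def
      proof (rule nn_integral_less)
        show "(\<lambda>w. ennreal \<bar>h w\<bar> * U w) \<in> borel_measurable M" using hm Um by measurable
        show "(\<lambda>w. ennreal \<bar>h w\<bar> * W w) \<in> borel_measurable M" using hm Wm by measurable
        show "(\<integral>\<^sup>+w. ennreal \<bar>h w\<bar> * U w \<partial>M) \<noteq> \<infinity>" using Ifin unfolding I_def .
        show "AE w in M. ennreal \<bar>h w\<bar> * U w \<le> ennreal \<bar>h w\<bar> * W w"
          by (auto intro!: AE_I2 mult_left_mono UW)
        show "\<not> (AE w in M. ennreal \<bar>h w\<bar> * W w \<le> ennreal \<bar>h w\<bar> * U w)" using nle .
      qed
      with WI show False by simp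
    qed
    have "AE w in M. w \<in> A \<longrightarrow> ennreal (v k w) \<le> U w"
      using AEle
    proof eventually_elim
      case (elim w)
      show ?case
      proof (intro impI)
        assume wA: "w \<in> A"
        then have ws: "w \<in> space M" by (simp add: A_def)
        have hpos: "0 < ennreal \<bar>h w\<bar>"
        proof (rule ccontr)
          assume "\<not> 0 < ennreal \<bar>h w\<bar>"
          then have "ennreal \<bar>h w\<bar> = 0" by (simp add: not_less)
          then show False using wA by (simp add: A_def)
        qed
        show "ennreal (v k w) \<le> U w"
        proof (rule ccontr)
          assume "\<not> ennreal (v k w) \<le> U w"
          then have "U w < ennreal (v k w)" by (simp add: not_le)
          then have "ennreal \<bar>h w\<bar> * U w < ennreal \<bar>h w\<bar> * ennreal (v k w)"
            using hpos by (intro ennreal_mult_strict_left_mono) auto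
          also have "\<dots> \<le> ennreal \<bar>h w\<bar> * W w" by (intro mult_left_mono vW) auto
          finally show False using elim by simp
        qed
      qed
    qed
    with nk show False by blast
  qed
  have "(\<integral>\<^sup>+w. ennreal \<bar>h w\<bar> * ennreal \<bar>x w\<bar> \<partial>M) \<le> I"
    unfolding I_def by (rule nn_integral_mono_AE[OF main])
  then show ?thesis using Is sC by simp
qed



lemma max_width_mono: "S \<subseteq> T \<Longrightarrow> max_width M S \<Longrightarrow> max_width M T"
  unfolding max_width_def by blast

lemma J0D:
  assumes "J0 M E"
  shows "is_bis M E" "max_width M (fst E)" "foundation M (fst (oc_part M E)) (fst E)"
    "foundation M (fst (oc_part M (kdual M E))) (fst (kdual M E))"
  using assms unfolding J0_def by blast+

lemma foundation_mw: "foundation M S T \<Longrightarrow> max_width M S"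
  unfolding foundation_def by blast

lemma foundation_sub: "foundation M S T \<Longrightarrow> S \<subseteq> T"
  unfolding foundation_def by blast

lemma oc_part_fst: "fst (oc_part M E) = {x \<in> fst E. oc_elem M E x}"
  by (simp add: oc_part_def)

lemma oc_part_snd: "snd (oc_part M E) = snd E"
  by (simp add: oc_part_def)

lemma oc_part_oc_part: "fst (oc_part M (oc_part M E)) = fst (oc_part M E)"
proof -
  have "oc_elem M (oc_part M E) = oc_elem M E" by (rule oc_elem_snd) (simp add: oc_part_snd)
  then show ?thesis by (simp add: oc_part_fst)
qed

lemma kdual_is_bis:
  assumes bis: "is_bis M E" and mw: "max_width M (fst E)"
  shows "is_bis M (kdual M E)"
proof -
  have pb: "pre_bis M (fst E) (snd E)" by (rule is_bis_pre[OF bis])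
  have Sm: "fst E \<subseteq> borel_measurable M" using pb unfolding pre_bis_def by blast
  have zero: "(\<lambda>_. 0) \<in> fst (kdual M E)"
    using kdual_crit[OF Sm, of "\<lambda>_. 0" 0] by simp
  show ?thesis unfolding is_bis_iff
  proof (intro conjI)
    show "fst (kdual M E) \<subseteq> borel_measurable M" by (auto simp: kdual_fst)
    show "(\<lambda>_. 0) \<in> fst (kdual M E)" by (rule zero)
    show "\<forall>x\<in>fst (kdual M E). \<forall>y\<in>fst (kdual M E). (\<lambda>w. x w + y w) \<in> fst (kdual M E)"
      using kd_add[OF pb] by blast
    show "\<forall>x\<in>fst (kdual M E). \<forall>c. (\<lambda>w. c * x w) \<in> fst (kdual M E)"
      using kd_scale[OF pb] by blast
    show "\<forall>x\<in>fst (kdual M E). 0 \<le> snd (kdual M E) x"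
      using knorm_nonneg by blast
    show "\<forall>x\<in>fst (kdual M E). snd (kdual M E) x = 0 \<longrightarrow> (AE w in M. x w = 0)"
      using kd_zero_ae[OF pb mw] by blast
    show "\<forall>x\<in>fst (kdual M E). \<forall>y\<in>fst (kdual M E). snd (kdual M E) (\<lambda>w. x w + y w) \<le> snd (kdual M E) x + snd (kdual M E) y"
      using kd_add[OF pb] by blast
    show "\<forall>x\<in>fst (kdual M E). \<forall>c. snd (kdual M E) (\<lambda>w. c * x w) = \<bar>c\<bar> * snd (kdual M E) x"
      using kd_homog[OF pb] by blast
    show "\<forall>X. (\<forall>k. X k \<in> fst (kdual M E)) \<longrightarrow>
        (\<forall>e>0. \<exists>N. \<forall>i\<ge>N. \<forall>j\<ge>N. snd (kdual M E) (\<lambda>w. X i w - X j w) < e) \<longrightarrow>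
        (\<exists>x\<in>fst (kdual M E). (\<lambda>k. snd (kdual M E) (\<lambda>w. X k w - x w)) \<longlonglongrightarrow> 0)"
    proof (intro allI impI)
      fix X :: "nat \<Rightarrow> 'a \<Rightarrow> real"
      assume X: "\<forall>k. X k \<in> fst (kdual M E)"
        and cau: "\<forall>e>0. \<exists>N. \<forall>i\<ge>N. \<forall>j\<ge>N. snd (kdual M E) (\<lambda>w. X i w - X j w) < e"
      show "\<exists>x\<in>fst (kdual M E). (\<lambda>k. snd (kdual M E) (\<lambda>w. X k w - x w)) \<longlonglongrightarrow> 0"
        by (rule kd_complete[OF pb mw _ cau]) (use X in blast)
    qed
    show "\<forall>y\<in>fst (kdual M E). \<forall>x\<in>borel_measurable M. (AE w in M. \<bar>x w\<bar> \<le> \<bar>y w\<bar>) \<longrightarrow>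
        x \<in> fst (kdual M E) \<and> snd (kdual M E) x \<le> snd (kdual M E) y"
      using kd_ideal[OF pb] by blast
  qed
qed

lemma oc_sub:
  assumes bis: "is_bis M E" and sub: "sub1 E F"
  shows "fst (oc_part M E) \<subseteq> fst (oc_part M F)"
proof
  fix x assume "x \<in> fst (oc_part M E)"
  then have x: "x \<in> fst E" and ox: "oc_elem M E x" by (auto simp: oc_part_fst)
  have xF: "x \<in> fst F" using sub x unfolding sub1_def by blast
  have "oc_elem M F x"
  proof (rule oc_elemI)
    fix D :: "('a \<Rightarrow> real) set" and e :: real
    assume D: "D \<subseteq> borel_measurable M" "D \<noteq> {}"
      "\<forall>a\<in>D. \<forall>b\<in>D. \<exists>c\<in>D. (AE w in M. c w \<le> a w) \<and> (AE w in M. c w \<le> b w)"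
      "\<forall>d\<in>D. AE w in M. 0 \<le> d w \<and> d w \<le> \<bar>x w\<bar>"
      "\<forall>z\<in>borel_measurable M. (\<forall>d\<in>D. AE w in M. z w \<le> d w) \<longrightarrow> (AE w in M. z w \<le> 0)"
      and e: "0 < e"
    obtain d where d: "d \<in> D" "snd E d < e" using oc_elemD[OF ox D e] by blast
    have "AE w in M. 0 \<le> d w \<and> d w \<le> \<bar>x w\<bar>" using D(4) d(1) by blast
    then have "AE w in M. \<bar>d w\<bar> \<le> \<bar>x w\<bar>" by eventually_elim auto
    then have dE: "d \<in> fst E" using b_ideal[OF bis x] D(1) d(1) by blast
    then have "snd F d \<le> snd E d" using sub unfolding sub1_def by blast
    then show "\<exists>d\<in>D. snd F d < e" using d by (intro bexI[of _ d]) auto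
  qed
  then show "x \<in> fst (oc_part M F)" using xF by (simp add: oc_part_fst)
qed

lemma bis_eq_sub1: "bis_eq A B \<Longrightarrow> sub1 A B \<and> sub1 B A"
  unfolding bis_eq_def sub1_def by auto

lemma oc_part_cong:
  assumes "bis_eq A B" "is_bis M A" "is_bis M B"
  shows "fst (oc_part M A) = fst (oc_part M B)"
  using oc_sub[OF assms(2)] oc_sub[OF assms(3)] bis_eq_sub1[OF assms(1)] by blast

lemma kdual_oc_sub:
  assumes bis: "is_bis M E" and fd: "foundation M G (fst E)"
  shows "sub1 (kdual M (G, snd E)) (kdual M E)"
  unfolding sub1_def
proof (intro conjI ballI subsetI)
  fix f assume f: "f \<in> fst (kdual M (G, snd E))"
  have pbG: "pre_bis M G (snd E)" by (rule foundation_pre[OF bis fd])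
  have pbG': "pre_bis M (fst (G, snd E)) (snd (G, snd E))" using pbG by simp
  have GS: "G \<subseteq> fst E" using fd unfolding foundation_def by blast
  have Sm: "fst E \<subseteq> borel_measurable M" using b_meas[OF bis] by blast
  have fm: "f \<in> borel_measurable M" using f by (simp add: kdual_fst)
  let ?C = "snd (kdual M (G, snd E)) f"
  have C: "0 \<le> ?C" by (rule knorm_nonneg[OF f])
  have "f \<in> fst (kdual M E) \<and> snd (kdual M E) f \<le> ?C"
  proof (rule kdual_crit[OF Sm fm C])
    fix x assume x: "x \<in> fst E"
    have xm: "x \<in> borel_measurable M" using Sm x by blast
    have "(\<integral>\<^sup>+w. ennreal \<bar>f w\<bar> * ennreal \<bar>x w\<bar> \<partial>M) \<le> ennreal (?C * snd E x)"
    proof (rule key_density[OF bis fd fm x])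
      fix y assume y: "y \<in> G" and yb: "\<forall>w\<in>space M. 0 \<le> y w \<and> y w \<le> \<bar>x w\<bar>"
      have ym: "y \<in> borel_measurable M" using y GS Sm by blast
      have "(\<integral>\<^sup>+w. ennreal \<bar>f w\<bar> * ennreal (y w) \<partial>M) = (\<integral>\<^sup>+w. ennreal \<bar>f w * y w\<bar> \<partial>M)"
        by (rule nn_integral_cong) (use yb in \<open>auto simp: abs_mult ennreal_mult\<close>)
      also have "\<dots> \<le> ennreal (?C * snd E y)"
        using pairing_abs[OF pbG' f] y by simp
      also have "\<dots> \<le> ennreal (?C * snd E x)"
      proof -
        have "AE w in M. \<bar>y w\<bar> \<le> \<bar>x w\<bar>" using yb by (auto intro!: AE_I2)
        then have "snd E y \<le> snd E x" using b_ideal[OF bis x ym] by blast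
        then show ?thesis using C by (intro ennreal_leI mult_left_mono) auto
      qed
      finally show "(\<integral>\<^sup>+w. ennreal \<bar>f w\<bar> * ennreal (y w) \<partial>M) \<le> ennreal (?C * snd E x)" .
    qed
    then show "(\<integral>\<^sup>+w. ennreal \<bar>f w * x w\<bar> \<partial>M) \<le> ennreal (?C * snd E x)"
      by (simp add: abs_mult ennreal_mult)
  qed
  then show "f \<in> fst (kdual M E)" "snd (kdual M E) f \<le> ?C" by auto
qed

lemma oc_part_is_bis:
  assumes bis: "is_bis M E" and fd: "foundation M (fst (oc_part M E)) (fst E)"
  shows "is_bis M (oc_part M E)"
proof -
  let ?S0 = "fst (oc_part M E)"
  have S0: "?S0 = {x \<in> fst E. oc_elem M E x}" by (rule oc_part_fst)
  have sn: "snd (oc_part M E) = snd E" by (rule oc_part_snd)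
  have GS: "?S0 \<subseteq> fst E" using S0 by blast
  show ?thesis unfolding is_bis_iff sn
  proof (intro conjI)
    show "?S0 \<subseteq> borel_measurable M" using GS b_meas[OF bis] by blast
    show "(\<lambda>_. 0) \<in> ?S0" using fd unfolding foundation_def by blast
    show "\<forall>x\<in>?S0. \<forall>y\<in>?S0. (\<lambda>w. x w + y w) \<in> ?S0" using fd unfolding foundation_def by blast
    show "\<forall>x\<in>?S0. \<forall>c. (\<lambda>w. c * x w) \<in> ?S0" using fd unfolding foundation_def by blast
    show "\<forall>x\<in>?S0. 0 \<le> snd E x" using GS b_nonneg[OF bis] by blast
    show "\<forall>x\<in>?S0. snd E x = 0 \<longrightarrow> (AE w in M. x w = 0)" using GS b_zero_ae[OF bis] by blast
    show "\<forall>x\<in>?S0. \<forall>y\<in>?S0. snd E (\<lambda>w. x w + y w) \<le> snd E x + snd E y" using GS b_tri[OF bis] by blast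
    show "\<forall>x\<in>?S0. \<forall>c. snd E (\<lambda>w. c * x w) = \<bar>c\<bar> * snd E x" using GS b_homog[OF bis] by blast
    show "\<forall>X. (\<forall>k. X k \<in> ?S0) \<longrightarrow>
        (\<forall>e>0. \<exists>N. \<forall>i\<ge>N. \<forall>j\<ge>N. snd E (\<lambda>w. X i w - X j w) < e) \<longrightarrow>
        (\<exists>x\<in>?S0. (\<lambda>k. snd E (\<lambda>w. X k w - x w)) \<longlonglongrightarrow> 0)"
    proof (intro allI impI)
      fix X :: "nat \<Rightarrow> 'a \<Rightarrow> real"
      assume X: "\<forall>k. X k \<in> ?S0"
        and cau: "\<forall>e>0. \<exists>N. \<forall>i\<ge>N. \<forall>j\<ge>N. snd E (\<lambda>w. X i w - X j w) < e"
      have XE: "\<And>k. X k \<in> fst E" and oX: "\<And>k. oc_elem M E (X k)" using X S0 by auto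
      have compl: "\<forall>X. (\<forall>k. X k \<in> fst E) \<longrightarrow>
        (\<forall>e>0. \<exists>N. \<forall>i\<ge>N. \<forall>j\<ge>N. snd E (\<lambda>w. X i w - X j w) < e) \<longrightarrow>
        (\<exists>x\<in>fst E. (\<lambda>k. snd E (\<lambda>w. X k w - x w)) \<longlonglongrightarrow> 0)"
        using bis unfolding is_bis_iff by blast
      obtain x where x: "x \<in> fst E" and lim: "(\<lambda>k. snd E (\<lambda>w. X k w - x w)) \<longlonglongrightarrow> 0"
        using compl XE cau by blast
      have "oc_elem M E x" by (rule oc_closed[OF bis XE oX x lim])
      then have "x \<in> ?S0" using x S0 by blast
      then show "\<exists>x\<in>?S0. (\<lambda>k. snd E (\<lambda>w. X k w - x w)) \<longlonglongrightarrow> 0" using lim by blast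
    qed
    show "\<forall>y\<in>?S0. \<forall>x\<in>borel_measurable M. (AE w in M. \<bar>x w\<bar> \<le> \<bar>y w\<bar>) \<longrightarrow> x \<in> ?S0 \<and> snd E x \<le> snd E y"
    proof (intro ballI impI)
      fix y x assume y: "y \<in> ?S0" and xm: "x \<in> borel_measurable M" and le: "AE w in M. \<bar>x w\<bar> \<le> \<bar>y w\<bar>"
      have yE: "y \<in> fst E" and oy: "oc_elem M E y" using y S0 by auto
      have xE: "x \<in> fst E" and nle: "snd E x \<le> snd E y" using b_ideal[OF bis yE xm le] by blast+
      have "oc_elem M E x" by (rule oc_mono[OF oy le])
      then show "x \<in> ?S0 \<and> snd E x \<le> snd E y" using xE nle S0 by blast
    qed
  qed
qed



lemma foundation_refl: "foundation M S T \<Longrightarrow> foundation M S S"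
  unfolding foundation_def by blast

lemma oc_sub1: "sub1 (oc_part M E) E"
  by (auto simp: sub1_def oc_part_def)

lemma J0_dual_facts:
  assumes J: "J0 M E"
  shows "is_bis M (kdual M E)" "max_width M (fst (kdual M E))"
    "is_bis M (kdual M (kdual M E))" "max_width M (fst (kdual M (kdual M E)))"
    "sub1 E (kdual M (kdual M E))"
    "bis_eq (kdual M (kdual M (kdual M E))) (kdual M E)"
proof -
  note bis = J0D(1)[OF J] and mw = J0D(2)[OF J] and fd0 = J0D(3)[OF J] and fdk = J0D(4)[OF J]
  show bis1: "is_bis M (kdual M E)" by (rule kdual_is_bis[OF bis mw])
  show mw1: "max_width M (fst (kdual M E))"
    by (rule max_width_mono[OF foundation_sub[OF fdk] foundation_mw[OF fdk]])
  show bis2: "is_bis M (kdual M (kdual M E))" by (rule kdual_is_bis[OF bis1 mw1])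
  show s: "sub1 E (kdual M (kdual M E))" by (rule sub1_bidual[OF is_bis_pre[OF bis]])
  show mw2: "max_width M (fst (kdual M (kdual M E)))"
  proof -
    have "fst E \<subseteq> fst (kdual M (kdual M E))" using s unfolding sub1_def by blast
    then show ?thesis by (rule max_width_mono[OF _ mw])
  qed
  show "bis_eq (kdual M (kdual M (kdual M E))) (kdual M E)"
    by (rule sub1_antisym[OF sub1_kdual_anti[OF is_bis_pre[OF bis2] s] sub1_bidual[OF is_bis_pre[OF bis1]]])
qed

theorem theorem8:
  fixes M :: "'a measure"
  assumes "admissible M"
  shows
   "((\<forall>E. J0 M E \<longrightarrow> J0 M (oc_part M E)) \<and>
     (\<forall>E F. J0 M E \<longrightarrow> J0 M F \<longrightarrow> sub1 F E \<longrightarrow> sub1 (oc_part M F) (oc_part M E)) \<and>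
     (\<forall>E. J0 M E \<longrightarrow> sub1 (oc_part M E) E) \<and>
     (\<forall>E. J0 M E \<longrightarrow> bis_eq (oc_part M (oc_part M E)) (oc_part M E)))
    \<and>
    ((\<forall>E. J0 M E \<longrightarrow> J0 M (kdual M (kdual M E))) \<and>
     (\<forall>E F. J0 M E \<longrightarrow> J0 M F \<longrightarrow> sub1 E F \<longrightarrow> sub1 (kdual M (kdual M E)) (kdual M (kdual M F))) \<and>
     (\<forall>E. J0 M E \<longrightarrow> sub1 E (kdual M (kdual M E))) \<and>
     (\<forall>E. J0 M E \<longrightarrow> bis_eq (kdual M (kdual M (kdual M (kdual M E)))) (kdual M (kdual M E))))"
proof (intro conjI allI impI)
  fix E assume J: "J0 M E"
  note bis = J0D(1)[OF J] and mw = J0D(2)[OF J] and fd0 = J0D(3)[OF J] and fdk = J0D(4)[OF J]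
  show "J0 M (oc_part M E)"
  proof -
    have bis0: "is_bis M (oc_part M E)" by (rule oc_part_is_bis[OF bis fd0])
    have mw0: "max_width M (fst (oc_part M E))" by (rule foundation_mw[OF fd0])
    have fd00: "foundation M (fst (oc_part M (oc_part M E))) (fst (oc_part M E))"
      unfolding oc_part_oc_part by (rule foundation_refl[OF fd0])
    have op: "oc_part M E = (fst (oc_part M E), snd E)" by (simp add: oc_part_def)
    have s1: "sub1 (kdual M (oc_part M E)) (kdual M E)"
    proof -
      have "sub1 (kdual M (fst (oc_part M E), snd E)) (kdual M E)" by (rule kdual_oc_sub[OF bis fd0])
      then show ?thesis by (simp only: op[symmetric])
    qed
    have s2: "sub1 (kdual M E) (kdual M (oc_part M E))"
      by (rule sub1_kdual_anti[OF is_bis_pre[OF bis] oc_sub1])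
    have eq: "bis_eq (kdual M (oc_part M E)) (kdual M E)" by (rule sub1_antisym[OF s1 s2])
    have c: "fst (oc_part M (kdual M (oc_part M E))) = fst (oc_part M (kdual M E))"
      by (rule oc_part_cong[OF eq kdual_is_bis[OF bis0 mw0] kdual_is_bis[OF bis mw]])
    have c2: "fst (kdual M (oc_part M E)) = fst (kdual M E)" using eq unfolding bis_eq_def by blast
    have fdk0: "foundation M (fst (oc_part M (kdual M (oc_part M E)))) (fst (kdual M (oc_part M E)))"
      unfolding c c2 by (rule fdk)
    show ?thesis unfolding J0_def using bis0 mw0 fd00 fdk0 by blast
  qed
next
  fix E F assume JE: "J0 M E" and JF: "J0 M F" and sub: "sub1 F E"
  show "sub1 (oc_part M F) (oc_part M E)"
    using oc_sub[OF J0D(1)[OF JF] sub] sub unfolding sub1_def oc_part_snd by (auto simp: oc_part_fst)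
next
  fix E assume "J0 M E"
  show "sub1 (oc_part M E) E" by (rule oc_sub1)
next
  fix E assume "J0 M E"
  show "bis_eq (oc_part M (oc_part M E)) (oc_part M E)"
    unfolding bis_eq_def oc_part_oc_part oc_part_snd by simp
next
  fix E assume J: "J0 M E"
  note bis = J0D(1)[OF J] and mw = J0D(2)[OF J] and fd0 = J0D(3)[OF J] and fdk = J0D(4)[OF J]
  note df = J0_dual_facts[OF J]
  let ?E2 = "kdual M (kdual M E)"
  have bis2: "is_bis M ?E2" by (rule df(3))
  have fd2: "foundation M (fst (oc_part M ?E2)) (fst ?E2)"
    unfolding foundation_def
  proof (intro conjI)
    show "fst (oc_part M ?E2) \<subseteq> fst ?E2" by (auto simp: oc_part_fst)
    show "(\<lambda>_. 0) \<in> fst (oc_part M ?E2)" using b_zero[OF bis2] oc_zero[OF bis2] by (simp add: oc_part_fst)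
    show "\<forall>x\<in>fst (oc_part M ?E2). \<forall>y\<in>fst (oc_part M ?E2). (\<lambda>w. x w + y w) \<in> fst (oc_part M ?E2)"
      using b_add[OF bis2] oc_add[OF bis2] by (simp add: oc_part_fst)
    show "\<forall>x\<in>fst (oc_part M ?E2). \<forall>c. (\<lambda>w. c * x w) \<in> fst (oc_part M ?E2)"
      using b_scale[OF bis2] oc_scale[OF bis2] by (simp add: oc_part_fst)
    show "\<forall>y\<in>fst (oc_part M ?E2). \<forall>x\<in>fst ?E2. (AE w in M. \<bar>x w\<bar> \<le> \<bar>y w\<bar>) \<longrightarrow> x \<in> fst (oc_part M ?E2)"
      by (auto simp: oc_part_fst intro: oc_mono)
    show "max_width M (fst (oc_part M ?E2))"
      by (rule max_width_mono[OF oc_sub[OF bis df(5)] foundation_mw[OF fd0]])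
  qed
  have bis3: "is_bis M (kdual M ?E2)" by (rule kdual_is_bis[OF bis2 df(4)])
  have eq3: "bis_eq (kdual M ?E2) (kdual M E)" by (rule df(6))
  have c: "fst (oc_part M (kdual M ?E2)) = fst (oc_part M (kdual M E))"
    by (rule oc_part_cong[OF eq3 bis3 df(1)])
  have c2: "fst (kdual M ?E2) = fst (kdual M E)" using eq3 unfolding bis_eq_def by blast
  have fd3: "foundation M (fst (oc_part M (kdual M ?E2))) (fst (kdual M ?E2))"
    unfolding c c2 by (rule fdk)
  show "J0 M ?E2" unfolding J0_def using bis2 df(4) fd2 fd3 by blast
next
  fix E F assume JE: "J0 M E" and JF: "J0 M F" and sub: "sub1 E F"
  have s1: "sub1 (kdual M F) (kdual M E)" by (rule sub1_kdual_anti[OF is_bis_pre[OF J0D(1)[OF JF]] sub])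
  show "sub1 (kdual M (kdual M E)) (kdual M (kdual M F))"
    by (rule sub1_kdual_anti[OF is_bis_pre[OF J0_dual_facts(1)[OF JE]] s1])
next
  fix E assume J: "J0 M E"
  show "sub1 E (kdual M (kdual M E))" by (rule J0_dual_facts(5)[OF J])
next
  fix E assume J: "J0 M E"
  have eq3: "bis_eq (kdual M (kdual M (kdual M E))) (kdual M E)" by (rule J0_dual_facts(6)[OF J])
  have "kdual M (kdual M (kdual M (kdual M E))) = kdual M (kdual M E)"
    by (rule kdual_cong) (use eq3 in \<open>auto simp: bis_eq_def\<close>)
  then show "bis_eq (kdual M (kdual M (kdual M (kdual M E)))) (kdual M (kdual M E))"
    by (simp add: bis_eq_def)
qed

end
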